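(* Fix a prime power $q$ and an integer $r\ge 0$. Then the limit $p_r(q)=\lim_{n\to\infty} p_r(q,n)$, with $n$ ranging over integers of the same parity as $r$, exists and satisfies $0<p_r(q)<1$. Furthermore, for even $r\ge 2$, $$\frac{p_r(q)}{p_0(q)}=\frac{q^{r/2}}{\prod_{j=1}^r(q^j-1)},\qquad p_0(q)=\frac{1}{1+S},\quad S=\sum_{k=1}^\infty \frac{q^{k}}{\prod_{j=1}^{2k}(q^j-1)},$$ and for odd $r\ge 3$, $$\frac{p_r(q)}{p_1(q)}=\frac{(q-1)q^{(r-1)/2}}{\prod_{j=1}^r(q^j-1)},\qquad p_1(q)=\frac{1}{1+S'},\quad S'=(q-1)\sum_{k=1}^\infty \frac{q^{k}}{\prod_{j=1}^{2k+1}(q^j-1)}.$$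
   Context: Let ${\mathbb F}_q$ be the finite field of order $q$ and $V={\mathbb F}_q^n$. A differential on $V$ is a linear map $D\colon V\to V$ with $D^2=0$; its homology is $\ker D/\operatorname{im} D$, whose dimension $r$ necessarily has the same parity as $n$. Let $c(q,n)$ be the number of differentials on ${\mathbb F}_q^n$, and $c_r(q,n)$ the number of differentials whose homology has dimension $r$. Define $p_r(q,n)=c_r(q,n)/c(q,n)$ (the probability with respect to the uniform distribution on differentials). *)

theory Defs
  imports "HOL-Analysis.Analysis" "Jordan_Normal_Form.DL_Rank" "Jordan_Normal_Form.Matrix_Kernel"
begin

definition differentials :: "nat \<Rightarrow> ('a::{finite,field}) mat set" where
  "differentials n = {D \<in> carrier_mat n n. D * D = 0\<^sub>m n n}"

text \<open>Dimension of the homology ker D / im D, i.e. dim ker D - dim im D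
  (im D = column space, whose dimension is the rank).\<close>
definition homology_dim :: "nat \<Rightarrow> ('a::{finite,field}) mat \<Rightarrow> nat" where
  "homology_dim n D = kernel_dim D - vec_space.rank n D"

definition c_count :: "'a::{finite,field} itself \<Rightarrow> nat \<Rightarrow> nat" where
  "c_count T n = card (differentials n :: 'a mat set)"

definition c_r_count :: "'a::{finite,field} itself \<Rightarrow> nat \<Rightarrow> nat \<Rightarrow> nat" where
  "c_r_count T r n = card {D \<in> (differentials n :: 'a mat set). homology_dim n D = r}"

definition p_prob :: "'a::{finite,field} itself \<Rightarrow> nat \<Rightarrow> nat \<Rightarrow> real" where
  "p_prob T r n = real (c_r_count T r n) / real (c_count T n)"

end

theory Submission
  imports Defs
begin

unbundle no vec_syntax



definition im :: "'a::field mat \<Rightarrow> 'a vec set" where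
  "im A = (\<lambda>x. A *\<^sub>v x) ` carrier_vec (dim_col A)"

definition subsp :: "nat \<Rightarrow> 'a::field vec set \<Rightarrow> bool" where
  "subsp n W \<longleftrightarrow> W \<subseteq> carrier_vec n \<and> 0\<^sub>v n \<in> W \<and> (\<forall>x\<in>W. \<forall>y\<in>W. x + y \<in> W) \<and> (\<forall>a. \<forall>x\<in>W. a \<cdot>\<^sub>v x \<in> W)"

definition apc :: "'a mat \<Rightarrow> 'a vec \<Rightarrow> 'a mat" where
  "apc B w = mat (dim_row B) (Suc (dim_col B)) (\<lambda>(i,j). if j < dim_col B then B $$ (i,j) else w $ i)"

lemma card_carrier_vec: "card (carrier_vec n :: 'a::finite vec set) = CARD('a) ^ n"
proof -
  have eq: "carrier_vec n = vec_of_list ` {xs :: 'a list. set xs \<subseteq> UNIV \<and> length xs = n}"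
  proof (intro equalityI subsetI)
    fix v :: "'a vec" assume "v \<in> carrier_vec n"
    thus "v \<in> vec_of_list ` {xs :: 'a list. set xs \<subseteq> UNIV \<and> length xs = n}"
      by (intro image_eqI[of _ _ "list_of_vec v"]) (auto simp: vec_list)
  qed (auto intro!: carrier_vecI)
  have inj: "inj_on (vec_of_list :: 'a list \<Rightarrow> _) {xs. set xs \<subseteq> UNIV \<and> length xs = n}"
    by (metis inj_onI list_vec)
  have c: "card {xs :: 'a list. set xs \<subseteq> UNIV \<and> length xs = n} = CARD('a) ^ n"
    by (intro card_lists_length_eq) simp
  show ?thesis by (subst eq, subst card_image[OF inj], rule c)
qed

lemma finite_carrier_vec[simp]: "finite (carrier_vec n :: 'a::finite vec set)"
proof -
  have "carrier_vec n = vec_of_list ` {xs :: 'a list. set xs \<subseteq> UNIV \<and> length xs = n}"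
  proof (intro equalityI subsetI)
    fix v :: "'a vec" assume "v \<in> carrier_vec n"
    thus "v \<in> vec_of_list ` {xs :: 'a list. set xs \<subseteq> UNIV \<and> length xs = n}"
      by (intro image_eqI[of _ _ "list_of_vec v"]) (auto simp: vec_list)
  qed (auto intro!: carrier_vecI)
  thus ?thesis using finite_lists_length_eq[of "UNIV::'a set" n] by simp
qed

lemma im_carrier: "A \<in> carrier_mat n k \<Longrightarrow> im A \<subseteq> carrier_vec n"
  unfolding im_def by auto

lemma finite_im[simp]: "finite (im (A :: 'a::{finite,field} mat))"
  unfolding im_def by simp

lemma card_im_le: "card (im (A :: 'a::{finite,field} mat)) \<le> CARD('a) ^ dim_col A"
  unfolding im_def by (metis card_carrier_vec card_image_le finite_carrier_vec)

lemma subsp_im: "A \<in> carrier_mat n k \<Longrightarrow> subsp n (im A)"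
  unfolding subsp_def im_def
proof (intro conjI ballI allI)
  assume A: "A \<in> carrier_mat n k"
  show "(*\<^sub>v) A ` carrier_vec (dim_col A) \<subseteq> carrier_vec n" using A by auto
  show "0\<^sub>v n \<in> (*\<^sub>v) A ` carrier_vec (dim_col A)"
    using A by (intro image_eqI[of _ _ "0\<^sub>v k"]) auto
  fix x y assume "x \<in> (*\<^sub>v) A ` carrier_vec (dim_col A)" "y \<in> (*\<^sub>v) A ` carrier_vec (dim_col A)"
  then obtain u v where "u \<in> carrier_vec k" "v \<in> carrier_vec k" "x = A *\<^sub>v u" "y = A *\<^sub>v v" using A by auto
  thus "x + y \<in> (*\<^sub>v) A ` carrier_vec (dim_col A)"
    using A by (intro image_eqI[of _ _ "u + v"]) (auto simp: mult_add_distrib_mat_vec)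
next
  fix a x assume A: "A \<in> carrier_mat n k" and "x \<in> (*\<^sub>v) A ` carrier_vec (dim_col A)"
  then obtain u where "u \<in> carrier_vec k" "x = A *\<^sub>v u" by auto
  thus "a \<cdot>\<^sub>v x \<in> (*\<^sub>v) A ` carrier_vec (dim_col A)"
    using A by (intro image_eqI[of _ _ "a \<cdot>\<^sub>v u"]) (auto simp: mult_mat_vec)
qed

lemma dim_apc[simp]: "dim_col (apc B w) = Suc (dim_col B)" "dim_row (apc B w) = dim_row B"
  unfolding apc_def by auto

lemma apc_carrier[simp]: "B \<in> carrier_mat n k \<Longrightarrow> apc B w \<in> carrier_mat n (Suc k)"
  unfolding apc_def by auto

lemma mult_apc:
  fixes B :: "'a::field mat"
  assumes B: "B \<in> carrier_mat n k" and w: "w \<in> carrier_vec n" and x: "x \<in> carrier_vec (Suc k)"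
  shows "apc B w *\<^sub>v x = B *\<^sub>v vec k (\<lambda>i. x $ i) + x $ k \<cdot>\<^sub>v w"
proof (rule eq_vecI)
  fix i assume "i < dim_vec (B *\<^sub>v vec k (\<lambda>i. x $ i) + x $ k \<cdot>\<^sub>v w)"
  hence i: "i < n" using B w by simp
  have "(apc B w *\<^sub>v x) $ i = (\<Sum>j<Suc k. (if j < k then B $$ (i,j) else w $ i) * x $ j)"
    using B x i unfolding apc_def by (simp add: mult_mat_vec_def scalar_prod_def lessThan_atLeast0)
  also have "\<dots> = (\<Sum>j<k. B $$ (i,j) * x $ j) + w $ i * x $ k" by simp
  also have "\<dots> = (B *\<^sub>v vec k (\<lambda>i. x $ i) + x $ k \<cdot>\<^sub>v w) $ i"
    using B w i by (simp add: mult_mat_vec_def scalar_prod_def lessThan_atLeast0 mult.commute)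
  finally show "(apc B w *\<^sub>v x) $ i = (B *\<^sub>v vec k (\<lambda>i. x $ i) + x $ k \<cdot>\<^sub>v w) $ i" .
qed (use B w in \<open>simp add: apc_def\<close>)



lemma im_apc:
  fixes B :: "'a::field mat"
  assumes B: "B \<in> carrier_mat n k" and w: "w \<in> carrier_vec n"
  shows "im (apc B w) = {y + t \<cdot>\<^sub>v w | y t. y \<in> im B}"
proof (intro equalityI subsetI)
  fix z assume "z \<in> im (apc B w)"
  then obtain x where x: "x \<in> carrier_vec (Suc k)" "z = apc B w *\<^sub>v x"
    using B unfolding im_def by auto
  hence "z = B *\<^sub>v vec k (\<lambda>i. x $ i) + x $ k \<cdot>\<^sub>v w" using mult_apc[OF B w] by simp
  moreover have "B *\<^sub>v vec k (\<lambda>i. x $ i) \<in> im B" using B unfolding im_def by auto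
  ultimately show "z \<in> {y + t \<cdot>\<^sub>v w | y t. y \<in> im B}" by blast
next
  fix z assume "z \<in> {y + t \<cdot>\<^sub>v w | y t. y \<in> im B}"
  then obtain u t where u: "u \<in> carrier_vec k" "z = B *\<^sub>v u + t \<cdot>\<^sub>v w"
    using B unfolding im_def by auto
  define x where "x = vec (Suc k) (\<lambda>i. if i < k then u $ i else t)"
  have x: "x \<in> carrier_vec (Suc k)" unfolding x_def by simp
  have "vec k (\<lambda>i. x $ i) = u" using u(1) unfolding x_def by (intro eq_vecI) auto
  moreover have "x $ k = t" unfolding x_def by simp
  ultimately have "apc B w *\<^sub>v x = z" using mult_apc[OF B w x] u by simp
  thus "z \<in> im (apc B w)" using x B unfolding im_def by (auto intro!: image_eqI[of _ _ x])
qed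

lemma subsp_diff:
  fixes W :: "'a::field vec set"
  assumes W: "subsp n W" and y: "y \<in> W" and y': "y' \<in> W"
  shows "y' + (-1) \<cdot>\<^sub>v y \<in> W"
  using W y y' unfolding subsp_def by blast

lemma translates_notin:
  fixes W :: "'a::{finite,field} vec set"
  assumes W: "subsp n W" and w: "w \<in> carrier_vec n" and nw: "w \<notin> W"
  shows "card {y + t \<cdot>\<^sub>v w | y t. y \<in> W} = CARD('a) * card W"
proof -
  have WC: "W \<subseteq> carrier_vec n" using W unfolding subsp_def by auto
  have fW: "finite W" using WC finite_carrier_vec finite_subset by blast
  have eq: "{y + t \<cdot>\<^sub>v w | y t. y \<in> W} = (\<lambda>(y,t). y + t \<cdot>\<^sub>v w) ` (W \<times> UNIV)" by auto
  have "inj_on (\<lambda>(y,t). y + t \<cdot>\<^sub>v w) (W \<times> UNIV)"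
  proof (rule inj_onI, clarify)
    fix y t y' t' assume yW: "y \<in> W" and y'W: "y' \<in> W" and e: "y + t \<cdot>\<^sub>v w = y' + t' \<cdot>\<^sub>v w"
    have yc: "y \<in> carrier_vec n" "y' \<in> carrier_vec n" using yW y'W WC by auto
    have comp: "y $ i + t * w $ i = y' $ i + t' * w $ i" if "i < n" for i
    proof -
      have "(y + t \<cdot>\<^sub>v w) $ i = (y' + t' \<cdot>\<^sub>v w) $ i" using e by simp
      thus ?thesis using that yc w by simp
    qed
    show "y = y' \<and> t = t'"
    proof (cases "t = t'")
      case True
      hence "y = y'" using comp yc by (intro eq_vecI) auto
      thus ?thesis using True by simp
    next
      case False
      have "(1 / (t - t')) \<cdot>\<^sub>v (y' + (-1) \<cdot>\<^sub>v y) \<in> W"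
        using W subsp_diff[OF W yW y'W] unfolding subsp_def by blast
      moreover have "(1 / (t - t')) \<cdot>\<^sub>v (y' + (-1) \<cdot>\<^sub>v y) = w"
      proof (rule eq_vecI)
        fix i assume "i < dim_vec w"
        hence i: "i < n" using w by simp
        have "y' $ i - y $ i = (t - t') * w $ i" using comp[OF i] by (simp add: algebra_simps)
        thus "((1 / (t - t')) \<cdot>\<^sub>v (y' + (-1) \<cdot>\<^sub>v y)) $ i = w $ i"
          using i yc w False by (simp add: field_simps)
      qed (use yc w in auto)
      ultimately show ?thesis using nw by simp
    qed
  qed
  hence "card {y + t \<cdot>\<^sub>v w | y t. y \<in> W} = card (W \<times> (UNIV :: 'a set))"
    unfolding eq by (rule card_image)
  thus ?thesis by (simp add: card_cartesian_product)
qed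

lemma translates_in:
  fixes W :: "'a::field vec set"
  assumes W: "subsp n W" and w: "w \<in> W"
  shows "{y + t \<cdot>\<^sub>v w | y t. y \<in> W} = W"
proof (intro equalityI subsetI)
  fix z assume "z \<in> {y + t \<cdot>\<^sub>v w | y t. y \<in> W}"
  then obtain y t where "y \<in> W" "z = y + t \<cdot>\<^sub>v w" by auto
  thus "z \<in> W" using W w unfolding subsp_def by blast
next
  fix z assume z: "z \<in> W"
  have zc: "z \<in> carrier_vec n" "w \<in> carrier_vec n" using W z w unfolding subsp_def by auto
  have "z = z + 0 \<cdot>\<^sub>v w" using zc by (intro eq_vecI) auto
  thus "z \<in> {y + t \<cdot>\<^sub>v w | y t. y \<in> W}" using z by blast
qed

definition indep :: "'a::{finite,field} mat \<Rightarrow> bool" where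
  "indep B \<longleftrightarrow> card (im B) = CARD('a) ^ dim_col B"

lemma card_im_apc:
  fixes B :: "'a::{finite,field} mat"
  assumes B: "B \<in> carrier_mat n k" and w: "w \<in> carrier_vec n"
  shows "card (im (apc B w)) = (if w \<in> im B then card (im B) else CARD('a) * card (im B))"
  using im_apc[OF B w] translates_in[OF subsp_im[OF B]] translates_notin[OF subsp_im[OF B] w]
  by auto

lemma indep_apc:
  fixes B :: "'a::{finite,field} mat"
  assumes B: "B \<in> carrier_mat n k" and w: "w \<in> carrier_vec n"
  shows "indep (apc B w) \<longleftrightarrow> indep B \<and> w \<notin> im B"
proof -
  have q: "CARD('a) \<ge> 2"
  proof -
    have "{0::'a, 1} \<subseteq> UNIV" by auto
    hence "card {0::'a, 1} \<le> CARD('a)" by (intro card_mono) simp_all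
    thus ?thesis by simp
  qed
  have le: "card (im B) \<le> CARD('a) ^ k" using card_im_le[of B] B by simp
  have dc: "dim_col (apc B w) = Suc k" "dim_col B = k" using B by (auto simp: apc_def)
  show ?thesis
  proof (cases "w \<in> im B")
    case True
    have "card (im B) < CARD('a) ^ Suc k"
    proof -
      have "CARD('a) ^ k < CARD('a) ^ Suc k" using q by (intro power_strict_increasing) auto
      thus ?thesis using le by linarith
    qed
    thus ?thesis using True card_im_apc[OF B w] unfolding indep_def dc by auto
  next
    case False
    thus ?thesis using card_im_apc[OF B w] q unfolding indep_def dc by auto
  qed
qed



definition dropc :: "'a mat \<Rightarrow> 'a mat" where
  "dropc M = mat (dim_row M) (dim_col M - 1) (\<lambda>(i,j). M $$ (i,j))"

lemma dropc_apc:
  assumes M: "M \<in> carrier_mat n (Suc k)"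
  shows "dropc M \<in> carrier_mat n k" "col M k \<in> carrier_vec n" "apc (dropc M) (col M k) = M"
proof -
  show "dropc M \<in> carrier_mat n k" using M unfolding dropc_def by auto
  show "col M k \<in> carrier_vec n" using M by auto
  show "apc (dropc M) (col M k) = M"
    using M unfolding apc_def dropc_def by (intro eq_matI) (auto simp: less_Suc_eq)
qed

lemma apc_inj:
  assumes "B \<in> carrier_mat n k" "B' \<in> carrier_mat n k" "w \<in> carrier_vec n" "w' \<in> carrier_vec n"
    and e: "apc B w = apc B' w'"
  shows "B = B' \<and> w = w'"
proof
  show "B = B'"
  proof (rule eq_matI)
    fix i j assume "i < dim_row B'" "j < dim_col B'"
    hence "apc B w $$ (i,j) = apc B' w' $$ (i,j)" using e by simp
    thus "B $$ (i,j) = B' $$ (i,j)" using assms(1-4) \<open>i < dim_row B'\<close> \<open>j < dim_col B'\<close>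
      unfolding apc_def by auto
  qed (use assms in auto)
  show "w = w'"
  proof (rule eq_vecI)
    fix i assume "i < dim_vec w'"
    hence "apc B w $$ (i,k) = apc B' w' $$ (i,k)" using e by simp
    thus "w $ i = w' $ i" using assms(1-4) \<open>i < dim_vec w'\<close> unfolding apc_def by auto
  qed (use assms in auto)
qed

lemma im_subsp_apc:
  fixes B :: "'a::field mat"
  assumes W: "subsp n W" and B: "B \<in> carrier_mat n k" and w: "w \<in> carrier_vec n"
  shows "im (apc B w) \<subseteq> W \<longleftrightarrow> im B \<subseteq> W \<and> w \<in> W"
proof
  assume H: "im (apc B w) \<subseteq> W"
  have imc: "im B \<subseteq> carrier_vec n" using im_carrier[OF B] .
  have "y \<in> W" if y: "y \<in> im B" for y
  proof -
    have "y = y + 0 \<cdot>\<^sub>v w" using imc y w by (intro eq_vecI) auto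
    thus ?thesis using H y unfolding im_apc[OF B w] by blast
  qed
  moreover have "w \<in> W"
  proof -
    have "0\<^sub>v n \<in> im B" using subsp_im[OF B] unfolding subsp_def by auto
    moreover have "w = 0\<^sub>v n + 1 \<cdot>\<^sub>v w" using w by (intro eq_vecI) auto
    ultimately show ?thesis using H unfolding im_apc[OF B w] by blast
  qed
  ultimately show "im B \<subseteq> W \<and> w \<in> W" by blast
next
  assume "im B \<subseteq> W \<and> w \<in> W"
  thus "im (apc B w) \<subseteq> W" using W unfolding im_apc[OF B w] subsp_def by blast
qed

lemma carrier_mat_0: "carrier_mat n 0 = {0\<^sub>m n 0 :: 'a::zero mat}"
  by (auto intro!: eq_matI)

lemma im_0_cols: "im (0\<^sub>m n 0 :: 'a::field mat) = {0\<^sub>v n}"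
  unfolding im_def by (auto simp: scalar_prod_def intro!: eq_vecI image_eqI[of _ _ "0\<^sub>v 0"])

lemma finite_carrier_mat: "finite (carrier_mat n k :: 'a::finite mat set)"
proof -
  have H: "A \<in> mat_of_rows k ` {xs. set xs \<subseteq> carrier_vec k \<and> length xs = n}"
    if A: "A \<in> carrier_mat n k" for A :: "'a::finite mat"
  proof -
    have "mat_of_rows k (rows A) = A" using A mat_of_rows_rows[of A] by auto
    moreover have "rows A \<in> {xs. set xs \<subseteq> carrier_vec k \<and> length xs = n}"
      using A rows_carrier[of A] by auto
    ultimately show ?thesis by (metis image_eqI)
  qed
  have "(carrier_mat n k :: 'a mat set) \<subseteq> mat_of_rows k ` {xs. set xs \<subseteq> carrier_vec k \<and> length xs = n}"
  proof (rule subsetI)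
    fix A :: "'a mat" assume "A \<in> carrier_mat n k" 
    thus "A \<in> mat_of_rows k ` {xs. set xs \<subseteq> carrier_vec k \<and> length xs = n}" by (rule H)
  qed
  moreover have "finite {xs. set xs \<subseteq> (carrier_vec k :: 'a vec set) \<and> length xs = n}"
    by (rule finite_lists_length_eq) simp
  ultimately show ?thesis by (meson finite_imageI finite_subset)
qed

lemma count_indep:
  fixes W :: "'a::{finite,field} vec set"
  assumes W: "subsp n W"
  shows "card {B \<in> carrier_mat n k. im B \<subseteq> W \<and> indep B} = (\<Prod>i<k. card W - CARD('a) ^ i)"
proof (induction k)
  case 0
  have "{B \<in> carrier_mat n 0. im B \<subseteq> W \<and> indep B} = {0\<^sub>m n 0 :: 'a mat}"
    using W unfolding carrier_mat_0 indep_def subsp_def by (auto simp: im_0_cols)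
  thus ?case by simp
next
  case (Suc k)
  let ?S = "\<lambda>k. {B \<in> carrier_mat n k. im B \<subseteq> W \<and> indep B}"
  have WC: "W \<subseteq> carrier_vec n" using W unfolding subsp_def by auto
  have fW: "finite W" using WC finite_carrier_vec finite_subset by blast
  have eq: "?S (Suc k) = (\<lambda>(B,w). apc B w) ` (SIGMA B:?S k. W - im B)"
  proof (intro equalityI subsetI)
    fix M assume "M \<in> ?S (Suc k)"
    hence M: "M \<in> carrier_mat n (Suc k)" "im M \<subseteq> W" "indep M" by auto
    note d = dropc_apc[OF M(1)]
    have "im (dropc M) \<subseteq> W \<and> col M k \<in> W" using M(2) im_subsp_apc[OF W d(1,2)] d(3) by simp
    moreover have "indep (dropc M) \<and> col M k \<notin> im (dropc M)" using M(3) indep_apc[OF d(1,2)] d(3) by simp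
    ultimately show "M \<in> (\<lambda>(B,w). apc B w) ` (SIGMA B:?S k. W - im B)"
      using d by (intro image_eqI[of _ _ "(dropc M, col M k)"]) auto
  next
    fix M assume "M \<in> (\<lambda>(B,w). apc B w) ` (SIGMA B:?S k. W - im B)"
    then obtain B w where B: "B \<in> carrier_mat n k" "im B \<subseteq> W" "indep B" and w: "w \<in> W" "w \<notin> im B"
      and M: "M = apc B w" by auto
    have wc: "w \<in> carrier_vec n" using w WC by auto
    show "M \<in> ?S (Suc k)" using M B w wc im_subsp_apc[OF W B(1) wc] indep_apc[OF B(1) wc] by auto
  qed
  have inj: "inj_on (\<lambda>(B,w). apc B w) (SIGMA B:?S k. W - im B)"
  proof (rule inj_onI)
    fix x y assume x: "x \<in> (SIGMA B:?S k. W - im B)" and y: "y \<in> (SIGMA B:?S k. W - im B)"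
      and e: "(case x of (B,w) \<Rightarrow> apc B w) = (case y of (B,w) \<Rightarrow> apc B w)"
    obtain B w where xe: "x = (B,w)" by (cases x)
    obtain B' w' where ye: "y = (B',w')" by (cases y)
    have "B \<in> carrier_mat n k" "B' \<in> carrier_mat n k" "w \<in> carrier_vec n" "w' \<in> carrier_vec n"
      using x y WC unfolding xe ye by auto
    from apc_inj[OF this] show "x = y" using e unfolding xe ye by auto
  qed
  have fS: "finite (?S k)"
  proof -
    have "?S k \<subseteq> carrier_mat n k" by auto
    moreover have "finite (carrier_mat n k :: 'a mat set)" by (rule finite_carrier_mat)
    ultimately show ?thesis by (rule finite_subset)
  qed
  have "card (?S (Suc k)) = card (SIGMA B:?S k. W - im B)" unfolding eq by (rule card_image[OF inj])
  also have "\<dots> = (\<Sum>B\<in>?S k. card (W - im B))" using fS fW by (intro card_SigmaI) auto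
  also have "\<dots> = (\<Sum>B\<in>?S k. card W - CARD('a) ^ k)"
    by (intro sum.cong refl) (auto simp: card_Diff_subset indep_def)
  also have "\<dots> = card (?S k) * (card W - CARD('a) ^ k)" by simp
  finally show ?case using Suc.IH by simp
qed



lemma q_ge2: "CARD('a::{finite,field}) \<ge> 2"
proof -
  have "{0::'a, 1} \<subseteq> UNIV" by auto
  hence "card {0::'a, 1} \<le> CARD('a)" by (intro card_mono) simp_all
  thus ?thesis by simp
qed

lemma subsp_carrier: "subsp n (carrier_vec n :: 'a::field vec set)"
  unfolding subsp_def by auto

lemma card_subsp_le: "subsp n (W :: 'a::{finite,field} vec set) \<Longrightarrow> card W \<le> CARD('a) ^ n"
  unfolding subsp_def by (metis card_carrier_vec card_mono finite_carrier_vec)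

lemma basis_exists:
  fixes W :: "'a::{finite,field} vec set"
  assumes W: "subsp n W"
  shows "\<exists>r B. B \<in> carrier_mat n r \<and> im B = W \<and> indep B"
proof -
  have "\<exists>r B. B \<in> carrier_mat n r \<and> im B \<subseteq> W \<and> indep B \<and> (im B = W \<or> s \<le> r)" for s
  proof (induction s)
    case 0
    show ?case using W unfolding subsp_def
      by (intro exI[of _ 0] exI[of _ "0\<^sub>m n 0"]) (auto simp: im_0_cols indep_def)
  next
    case (Suc s)
    then obtain r B where B: "B \<in> carrier_mat n r" "im B \<subseteq> W" "indep B" "im B = W \<or> s \<le> r" by blast
    show ?case
    proof (cases "im B = W")
      case True thus ?thesis using B by blast
    next
      case False
      then obtain w where w: "w \<in> W" "w \<notin> im B" using B by blast
      have wc: "w \<in> carrier_vec n" using w W unfolding subsp_def by auto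
      show ?thesis using B w False im_subsp_apc[OF W B(1) wc] indep_apc[OF B(1) wc] wc
        by (intro exI[of _ "Suc r"] exI[of _ "apc B w"]) auto
    qed
  qed
  from this[of "Suc n"] obtain r B where B: "B \<in> carrier_mat n r" "im B \<subseteq> W" "indep B"
    "im B = W \<or> Suc n \<le> r" by blast
  have "\<not> Suc n \<le> r"
  proof
    assume r: "Suc n \<le> r"
    have "CARD('a) ^ r \<le> CARD('a) ^ n"
      using B card_subsp_le[OF subsp_im[OF B(1)]] unfolding indep_def by auto
    moreover have "CARD('a) ^ n < CARD('a) ^ r"
      using q_ge2[where 'a='a] r by (intro power_strict_increasing) auto
    ultimately show False by simp
  qed
  thus ?thesis using B by blast
qed

lemma mult_unit_vec: "A \<in> carrier_mat m n \<Longrightarrow> j < n \<Longrightarrow> A *\<^sub>v unit_vec n j = col (A :: 'a::field mat) j"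
  by (intro eq_vecI) auto

lemma factorization:
  fixes A :: "'a::{finite,field} mat"
  assumes A: "A \<in> carrier_mat m n"
  shows "\<exists>r B C. B \<in> carrier_mat m r \<and> C \<in> carrier_mat r n \<and> A = B * C \<and> indep B \<and> im B = im A"
proof -
  obtain r B where B: "B \<in> carrier_mat m r" "im B = im A" "indep B"
    using basis_exists[OF subsp_im[OF A]] by blast
  have "\<forall>j. \<exists>c. j < n \<longrightarrow> c \<in> carrier_vec r \<and> B *\<^sub>v c = col A j"
  proof (intro allI)
    fix j show "\<exists>c. j < n \<longrightarrow> c \<in> carrier_vec r \<and> B *\<^sub>v c = col A j"
    proof (cases "j < n")
      case True
      have "col A j \<in> im A" using A True mult_unit_vec[OF A True, symmetric] unfolding im_def
        by (auto intro!: image_eqI[of _ _ "unit_vec n j"])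
      hence "col A j \<in> im B" using B(2) by simp
      then obtain c where c: "c \<in> carrier_vec (dim_col B)" "col A j = B *\<^sub>v c"
        unfolding im_def by blast
      thus ?thesis using B(1) by (intro exI[of _ c]) auto
    qed auto
  qed
  then obtain c where c: "\<And>j. j < n \<Longrightarrow> c j \<in> carrier_vec r \<and> B *\<^sub>v c j = col A j"
    by metis
  define C where "C = mat r n (\<lambda>(i,j). c j $ i)"
  have C: "C \<in> carrier_mat r n" unfolding C_def by simp
  have colC: "col C j = c j" if "j < n" for j
    using c[OF that] that unfolding C_def by (intro eq_vecI) auto
  have "A = B * C"
  proof (rule eq_matI)
    fix i j assume i: "i < dim_row (B * C)" and j: "j < dim_col (B * C)"
    hence ij: "i < m" "j < n" using B C by auto
    have "(B * C) $$ (i,j) = row B i \<bullet> c j" using ij B C colC[OF ij(2)] by simp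
    also have "\<dots> = (B *\<^sub>v c j) $ i" using ij B by simp
    also have "\<dots> = A $$ (i,j)" using c[OF ij(2)] ij A by simp
    finally show "A $$ (i,j) = (B * C) $$ (i,j)" by simp
  qed (use A B C in auto)
  thus ?thesis using B C by blast
qed

lemma im_mult_subset:
  assumes "B \<in> carrier_mat m r" "C \<in> carrier_mat r n"
  shows "im (B * C) \<subseteq> im (B :: 'a::field mat)"
  using assms unfolding im_def by (auto simp: assoc_mult_mat_vec intro!: image_eqI)

lemma card_im_transpose_le:
  fixes A :: "'a::{finite,field} mat"
  assumes A: "A \<in> carrier_mat m n"
  shows "card (im (A\<^sup>T)) \<le> card (im A)"
proof -
  obtain r B C where BC: "B \<in> carrier_mat m r" "C \<in> carrier_mat r n" "A = B * C" "indep B" "im B = im A"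
    using factorization[OF A] by blast
  have "A\<^sup>T = C\<^sup>T * B\<^sup>T" using BC transpose_mult by metis
  hence "im (A\<^sup>T) \<subseteq> im (C\<^sup>T)" using BC im_mult_subset[of "C\<^sup>T" n r "B\<^sup>T" m] by auto
  hence "card (im (A\<^sup>T)) \<le> card (im (C\<^sup>T))" by (intro card_mono) auto
  also have "\<dots> \<le> CARD('a) ^ r" using card_im_le[of "C\<^sup>T"] BC by simp
  also have "\<dots> = card (im A)" using BC unfolding indep_def by simp
  finally show ?thesis .
qed

lemma card_im_transpose:
  fixes A :: "'a::{finite,field} mat"
  assumes A: "A \<in> carrier_mat m n"
  shows "card (im (A\<^sup>T)) = card (im A)"
  using card_im_transpose_le[OF A] card_im_transpose_le[of "A\<^sup>T" n m] A
  by (simp add: transpose_transpose)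



lemma count_inj:
  "card {B \<in> carrier_mat n k. indep (B :: 'a::{finite,field} mat)} = (\<Prod>i<k. CARD('a) ^ n - CARD('a) ^ i)"
proof -
  have "{B \<in> carrier_mat n k. indep (B :: 'a mat)} = {B \<in> carrier_mat n k. im B \<subseteq> carrier_vec n \<and> indep B}"
    using im_carrier by blast
  thus ?thesis using count_indep[OF subsp_carrier, of n k] by (simp add: card_carrier_vec)
qed

lemma count_surj:
  "card {C \<in> carrier_mat k n. card (im (C :: 'a::{finite,field} mat)) = CARD('a) ^ k} = (\<Prod>i<k. CARD('a) ^ n - CARD('a) ^ i)"
proof -
  have "bij_betw transpose_mat {C \<in> carrier_mat k n. card (im (C :: 'a mat)) = CARD('a) ^ k}
     {B \<in> carrier_mat n k. indep (B :: 'a mat)}"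
  proof (rule bij_betw_imageI)
    show "inj_on transpose_mat {C \<in> carrier_mat k n. card (im (C :: 'a mat)) = CARD('a) ^ k}"
    proof (rule inj_onI)
      fix C C' :: "'a mat" assume "C\<^sup>T = C'\<^sup>T"
      hence "(C\<^sup>T)\<^sup>T = (C'\<^sup>T)\<^sup>T" by simp
      thus "C = C'" by (simp add: transpose_transpose)
    qed
    show "transpose_mat ` {C \<in> carrier_mat k n. card (im (C :: 'a mat)) = CARD('a) ^ k}
      = {B \<in> carrier_mat n k. indep (B :: 'a mat)}"
    proof (intro equalityI subsetI)
      fix B assume "B \<in> transpose_mat ` {C \<in> carrier_mat k n. card (im (C :: 'a mat)) = CARD('a) ^ k}"
      then obtain C where C: "C \<in> carrier_mat k n" "card (im C) = CARD('a) ^ k" "B = C\<^sup>T" by auto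
      thus "B \<in> {B \<in> carrier_mat n k. indep (B :: 'a mat)}"
        using card_im_transpose[OF C(1)] unfolding indep_def by auto
    next
      fix B assume "B \<in> {B \<in> carrier_mat n k. indep (B :: 'a mat)}"
      hence B: "B \<in> carrier_mat n k" "indep B" by auto
      have "card (im (B\<^sup>T)) = CARD('a) ^ k" using card_im_transpose[OF B(1)] B unfolding indep_def by auto
      thus "B \<in> transpose_mat ` {C \<in> carrier_mat k n. card (im (C :: 'a mat)) = CARD('a) ^ k}"
        using B by (intro image_eqI[of _ _ "B\<^sup>T"]) (auto simp: transpose_transpose)
    qed
  qed
  from bij_betw_same_card[OF this] show ?thesis using count_inj[of n k] by simp
qed

lemma rank_nullity_card:
  fixes A :: "'a::{finite,field} mat"
  assumes A: "A \<in> carrier_mat m n"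
  shows "card (im A) * card (mat_kernel A) = CARD('a) ^ n"
proof -
  define F where "F y = {x \<in> carrier_vec n. A *\<^sub>v x = y}" for y
  have U: "carrier_vec n = (\<Union>y\<in>im A. F y)" using A unfolding F_def im_def by auto
  have cF: "card (F y) = card (mat_kernel A)" if y: "y \<in> im A" for y
  proof -
    obtain x0 where x0: "x0 \<in> carrier_vec n" "y = A *\<^sub>v x0" using y A unfolding im_def by auto
    have "F y = (\<lambda>z. x0 + z) ` mat_kernel A"
    proof (intro equalityI subsetI)
      fix x assume "x \<in> F y"
      hence x: "x \<in> carrier_vec n" "A *\<^sub>v x = A *\<^sub>v x0" unfolding F_def x0 by auto
      have "A *\<^sub>v (x - x0) = A *\<^sub>v x - A *\<^sub>v x0" using A x x0 by (simp add: mult_minus_distrib_mat_vec)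
      also have "\<dots> = 0\<^sub>v m" using x A by (intro eq_vecI) auto
      finally have "x - x0 \<in> mat_kernel A" using A x x0 unfolding mat_kernel_def by auto
      moreover have "x = x0 + (x - x0)" using x x0 by (intro eq_vecI) auto
      ultimately show "x \<in> (\<lambda>z. x0 + z) ` mat_kernel A" by blast
    next
      fix x assume "x \<in> (\<lambda>z. x0 + z) ` mat_kernel A"
      then obtain z where z: "z \<in> carrier_vec n" "A *\<^sub>v z = 0\<^sub>v m" "x = x0 + z"
        using A unfolding mat_kernel_def by auto
      have "A *\<^sub>v x = A *\<^sub>v x0 + A *\<^sub>v z" using A z x0 by (simp add: mult_add_distrib_mat_vec)
      also have "\<dots> = A *\<^sub>v x0" using z A x0 by (intro eq_vecI) auto
      finally show "x \<in> F y" unfolding F_def using z x0 x0(2) by auto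
    qed
    moreover have "inj_on (\<lambda>z. x0 + z) (mat_kernel A)"
    proof (rule inj_onI)
      fix z z' assume zz: "z \<in> mat_kernel A" "z' \<in> mat_kernel A" and e: "x0 + z = x0 + z'"
      hence c: "z \<in> carrier_vec n" "z' \<in> carrier_vec n" using A unfolding mat_kernel_def by auto
      show "z = z'"
      proof (rule eq_vecI)
        fix i assume "i < dim_vec z'"
        hence i: "i < n" using c by simp
        have "(x0 + z) $ i = (x0 + z') $ i" using e by simp
        thus "z $ i = z' $ i" using i c x0 by simp
      qed (use c in simp)
    qed
    ultimately show ?thesis by (simp add: card_image)
  qed
  have "CARD('a) ^ n = card (\<Union>y\<in>im A. F y)" using U card_carrier_vec by metis
  also have "\<dots> = (\<Sum>y\<in>im A. card (F y))"
    by (rule card_UN_disjoint) (auto simp: F_def)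
  also have "\<dots> = (\<Sum>y\<in>im A. card (mat_kernel A))" using cF by simp
  finally show ?thesis by simp
qed



lemma zero_mat_mult_vec[simp]: "v \<in> carrier_vec n \<Longrightarrow> 0\<^sub>m m n *\<^sub>v (v :: 'a::semiring_0 vec) = 0\<^sub>v m"
  by (auto intro!: eq_vecI simp: scalar_prod_def)

lemma mat_eq_by_mult:
  fixes A :: "'a::field mat"
  assumes A: "A \<in> carrier_mat m n" and A': "A' \<in> carrier_mat m n"
    and e: "\<And>u. u \<in> carrier_vec n \<Longrightarrow> A *\<^sub>v u = A' *\<^sub>v u"
  shows "A = A'"
proof (rule eq_matI)
  fix i j assume i: "i < dim_row A'" and j: "j < dim_col A'"
  have "col A j = col A' j" using mult_unit_vec[OF A] mult_unit_vec[OF A'] e[of "unit_vec n j"] j A' by simp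
  hence "col A j $ i = col A' j $ i" by simp
  thus "A $$ (i,j) = A' $$ (i,j)" using i j A A' by simp
qed (use A A' in auto)

lemma factor_through:
  fixes A :: "'a::field mat"
  assumes A: "A \<in> carrier_mat m n" and B: "B \<in> carrier_mat m r" and sub: "im A \<subseteq> im B"
  shows "\<exists>C. C \<in> carrier_mat r n \<and> A = B * C"
proof -
  have "\<forall>j. \<exists>c. j < n \<longrightarrow> c \<in> carrier_vec r \<and> B *\<^sub>v c = col A j"
  proof (intro allI)
    fix j show "\<exists>c. j < n \<longrightarrow> c \<in> carrier_vec r \<and> B *\<^sub>v c = col A j"
    proof (cases "j < n")
      case True
      have "col A j \<in> im A" using A True mult_unit_vec[OF A True, symmetric] unfolding im_def
        by (auto intro!: image_eqI[of _ _ "unit_vec n j"])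
      hence "col A j \<in> im B" using sub by auto
      then obtain c where c: "c \<in> carrier_vec (dim_col B)" "col A j = B *\<^sub>v c"
        unfolding im_def by blast
      thus ?thesis using B by (intro exI[of _ c]) auto
    qed auto
  qed
  then obtain c where c: "\<And>j. j < n \<Longrightarrow> c j \<in> carrier_vec r \<and> B *\<^sub>v c j = col A j"
    by metis
  define C where "C = mat r n (\<lambda>(i,j). c j $ i)"
  have C: "C \<in> carrier_mat r n" unfolding C_def by simp
  have colC: "col C j = c j" if "j < n" for j
    using c[OF that] that unfolding C_def by (intro eq_vecI) auto
  have "A = B * C"
  proof (rule eq_matI)
    fix i j assume i: "i < dim_row (B * C)" and j: "j < dim_col (B * C)"
    hence ij: "i < m" "j < n" using B C by auto
    have "(B * C) $$ (i,j) = row B i \<bullet> c j" using ij B C colC[OF ij(2)] by simp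
    also have "\<dots> = (B *\<^sub>v c j) $ i" using ij B by simp
    also have "\<dots> = A $$ (i,j)" using c[OF ij(2)] ij A by simp
    finally show "A $$ (i,j) = (B * C) $$ (i,j)" by simp
  qed (use A B C in auto)
  thus ?thesis using C by blast
qed

lemma indep_inj:
  fixes B :: "'a::{finite,field} mat"
  assumes B: "B \<in> carrier_mat n k" and ind: "indep B"
  shows "inj_on (\<lambda>x. B *\<^sub>v x) (carrier_vec k)"
proof -
  have "card ((\<lambda>x. B *\<^sub>v x) ` carrier_vec k) = card (carrier_vec k :: 'a vec set)"
    using ind B unfolding indep_def im_def by (simp add: card_carrier_vec)
  thus ?thesis by (intro eq_card_imp_inj_on) auto
qed

lemma subsp_kernel:
  fixes C :: "'a::field mat"
  assumes C: "C \<in> carrier_mat k n"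
  shows "subsp n (mat_kernel C)"
  unfolding subsp_def
proof (intro conjI ballI allI)
  show "mat_kernel C \<subseteq> carrier_vec n" using C unfolding mat_kernel_def by auto
  show "0\<^sub>v n \<in> mat_kernel C" using C unfolding mat_kernel_def by (auto intro!: eq_vecI)
  fix x y assume x: "x \<in> mat_kernel C" and y: "y \<in> mat_kernel C"
  hence xy: "x \<in> carrier_vec n" "y \<in> carrier_vec n" "C *\<^sub>v x = 0\<^sub>v k" "C *\<^sub>v y = 0\<^sub>v k"
    using C unfolding mat_kernel_def by auto
  have "C *\<^sub>v (x + y) = 0\<^sub>v k" using xy C by (simp add: mult_add_distrib_mat_vec)
  thus "x + y \<in> mat_kernel C" using xy C unfolding mat_kernel_def by auto
next
  fix a x assume x: "x \<in> mat_kernel C"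
  hence xy: "x \<in> carrier_vec n" "C *\<^sub>v x = 0\<^sub>v k" using C unfolding mat_kernel_def by auto
  have "C *\<^sub>v (a \<cdot>\<^sub>v x) = a \<cdot>\<^sub>v (C *\<^sub>v x)" using xy C by (simp add: mult_mat_vec)
  also have "\<dots> = 0\<^sub>v k" using xy by (intro eq_vecI) auto
  finally have "C *\<^sub>v (a \<cdot>\<^sub>v x) = 0\<^sub>v k" .
  thus "a \<cdot>\<^sub>v x \<in> mat_kernel C" using xy C unfolding mat_kernel_def by auto
qed

lemma mult_zero_iff_im_kernel:
  fixes C :: "'a::field mat"
  assumes C: "C \<in> carrier_mat k n" and B: "B \<in> carrier_mat n r"
  shows "C * B = 0\<^sub>m k r \<longleftrightarrow> im B \<subseteq> mat_kernel C"
proof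
  assume z: "C * B = 0\<^sub>m k r"
  show "im B \<subseteq> mat_kernel C"
  proof
    fix y assume "y \<in> im B"
    then obtain x where x: "x \<in> carrier_vec r" "y = B *\<^sub>v x" using B unfolding im_def by auto
    have "C *\<^sub>v y = (C * B) *\<^sub>v x" using x C B by (simp add: assoc_mult_mat_vec)
    also have "\<dots> = 0\<^sub>v k" using z x by (auto intro!: eq_vecI simp: scalar_prod_def)
    finally show "y \<in> mat_kernel C" using x B C unfolding mat_kernel_def by auto
  qed
next
  assume sub: "im B \<subseteq> mat_kernel C"
  show "C * B = 0\<^sub>m k r"
  proof (rule mat_eq_by_mult[of _ k r])
    fix u :: "'a vec" assume u: "u \<in> carrier_vec r"
    have "B *\<^sub>v u \<in> im B" using u B unfolding im_def by auto
    hence "C *\<^sub>v (B *\<^sub>v u) = 0\<^sub>v k" using sub C unfolding mat_kernel_def by auto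
    thus "(C * B) *\<^sub>v u = 0\<^sub>m k r *\<^sub>v u" using u C B by (simp add: assoc_mult_mat_vec)
  qed (use C B in auto)
qed



lemma card_im_le_rows: "A \<in> carrier_mat m n \<Longrightarrow> card (im (A :: 'a::{finite,field} mat)) \<le> CARD('a) ^ m"
  using im_carrier[of A m n] by (metis card_carrier_vec card_mono finite_carrier_vec)

lemma im_eq_card:
  fixes A B :: "'a::{finite,field} mat"
  assumes "im A \<subseteq> im B" "card (im A) = card (im B)"
  shows "im A = im B"
  using assms card_subset_eq finite_im by metis

lemma im_mult_vec: "B \<in> carrier_mat m r \<Longrightarrow> C \<in> carrier_mat r n \<Longrightarrow>
  im (B * C) = (\<lambda>x. B *\<^sub>v x) ` im (C :: 'a::field mat)"
  unfolding im_def by (auto simp: assoc_mult_mat_vec image_image)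

lemma fiber_elem:
  fixes B C :: "'a::{finite,field} mat"
  assumes C: "C \<in> carrier_mat k n" "card (im C) = CARD('a) ^ k"
    and B: "B \<in> carrier_mat n k" "im B \<subseteq> mat_kernel C" "indep B"
  shows "B * C \<in> carrier_mat n n" "B * C * (B * C) = 0\<^sub>m n n" "im (B * C) = im B"
    "card (im (B * C)) = CARD('a) ^ k"
proof -
  show "B * C \<in> carrier_mat n n" using B C by auto
  have CB: "C * B = 0\<^sub>m k k" using mult_zero_iff_im_kernel[OF C(1) B(1)] B by simp
  have a1: "B * C * (B * C) = B * (C * (B * C))" using B C by (intro assoc_mult_mat) auto
  have a2: "C * (B * C) = (C * B) * C" using B C by (intro assoc_mult_mat[symmetric]) auto
  have "B * C * (B * C) = B * ((C * B) * C)" unfolding a1 a2 ..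
  also have "\<dots> = 0\<^sub>m n n" unfolding CB using B C by (simp add: left_mult_zero_mat right_mult_zero_mat)
  finally show "B * C * (B * C) = 0\<^sub>m n n" .
  have "im C = carrier_vec k"
    using C im_carrier[OF C(1)] card_subset_eq[of "carrier_vec k" "im C"] by (simp add: card_carrier_vec)
  thus imBC: "im (B * C) = im B" unfolding im_mult_vec[OF B(1) C(1)] using B unfolding im_def by simp
  show "card (im (B * C)) = CARD('a) ^ k" using imBC B unfolding indep_def by simp
qed

lemma fiber_card:
  fixes D :: "'a::{finite,field} mat"
  assumes D: "D \<in> carrier_mat n n" "D * D = 0\<^sub>m n n" "card (im D) = CARD('a) ^ k"
  defines "P \<equiv> SIGMA C:{C \<in> carrier_mat k n. card (im C) = CARD('a) ^ k}.
                  {B \<in> carrier_mat n k. im B \<subseteq> mat_kernel C \<and> indep B}"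
  shows "card {p \<in> P. (case p of (C,B) \<Rightarrow> B * C) = D} = (\<Prod>i<k. CARD('a) ^ k - CARD('a) ^ i)"
proof -
  let ?F = "{p \<in> P. (case p of (C,B) \<Rightarrow> B * C) = D}"
  let ?BS = "{B \<in> carrier_mat n k. im B \<subseteq> im D \<and> indep B}"
  have "bij_betw snd ?F ?BS"
  proof (rule bij_betw_imageI)
    show "inj_on snd ?F"
    proof (rule inj_onI)
      fix p p' assume p: "p \<in> ?F" and p': "p' \<in> ?F" and e: "snd p = snd p'"
      obtain C B where pe: "p = (C,B)" by (cases p)
      obtain C' B' where pe': "p' = (C',B')" by (cases p')
      have h: "C \<in> carrier_mat k n" "C' \<in> carrier_mat k n" "B \<in> carrier_mat n k" "indep B" "B = B'"
        "B * C = D" "B' * C' = D"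
        using p p' e unfolding pe pe' P_def by auto
      have "C = C'"
      proof (rule mat_eq_by_mult[OF h(1,2)])
        fix u :: "'a vec" assume u: "u \<in> carrier_vec n"
        have "B *\<^sub>v (C *\<^sub>v u) = B *\<^sub>v (C' *\<^sub>v u)"
          using h u by (metis assoc_mult_mat_vec)
        thus "C *\<^sub>v u = C' *\<^sub>v u" using indep_inj[OF h(3,4)] u h(1,2) by (auto dest: inj_onD)
      qed
      thus "p = p'" using h unfolding pe pe' by simp
    qed
    show "snd ` ?F = ?BS"
    proof (intro equalityI subsetI)
      fix B assume "B \<in> snd ` ?F"
      then obtain C where "(C,B) \<in> ?F" by force
      hence h: "C \<in> carrier_mat k n" "card (im C) = CARD('a) ^ k" "B \<in> carrier_mat n k"
        "im B \<subseteq> mat_kernel C" "indep B" "B * C = D" unfolding P_def by auto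
      show "B \<in> ?BS" using h fiber_elem[OF h(1,2,3,4,5)] by auto
    next
      fix B assume "B \<in> ?BS"
      hence B: "B \<in> carrier_mat n k" "im B \<subseteq> im D" "indep B" by auto
      have imB: "im B = im D" using im_eq_card[OF B(2)] B(3) D(3) unfolding indep_def using B(1) by simp
      obtain C where C: "C \<in> carrier_mat k n" "D = B * C" using factor_through[OF D(1) B(1)] imB by auto
      have "card (im D) \<le> card (im C)"
        unfolding C(2) im_mult_vec[OF B(1) C(1)] by (rule card_image_le) simp
      moreover have "card (im C) \<le> CARD('a) ^ k" using card_im_le_rows[OF C(1)] .
      ultimately have cC: "card (im C) = CARD('a) ^ k" using D(3) by simp
      have "C * B = 0\<^sub>m k k"
      proof (rule mat_eq_by_mult[of _ k k])
        fix u :: "'a vec" assume u: "u \<in> carrier_vec k"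
        have "B *\<^sub>v u \<in> im D" using imB u B unfolding im_def by auto
        then obtain z where z: "z \<in> carrier_vec n" "B *\<^sub>v u = D *\<^sub>v z" using D unfolding im_def by auto
        have "B *\<^sub>v ((C * B) *\<^sub>v u) = D *\<^sub>v (B *\<^sub>v u)"
          using B C u by (simp add: assoc_mult_mat_vec)
        also have "\<dots> = (D * D) *\<^sub>v z" using z by (simp only: assoc_mult_mat_vec[OF D(1) D(1) z(1)])
        also have "\<dots> = B *\<^sub>v 0\<^sub>v k" using D z B by (auto intro!: eq_vecI simp: scalar_prod_def)
        finally have "(C * B) *\<^sub>v u = 0\<^sub>v k"
          using indep_inj[OF B(1,3)] u B C by (auto dest: inj_onD)
        thus "(C * B) *\<^sub>v u = 0\<^sub>m k k *\<^sub>v u" using u by simp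
      qed (use B C in auto)
      hence "im B \<subseteq> mat_kernel C" using mult_zero_iff_im_kernel[OF C(1) B(1)] by simp
      hence "(C,B) \<in> ?F" using C cC B unfolding P_def by auto
      thus "B \<in> snd ` ?F" by force
    qed
  qed
  hence "card ?F = card ?BS" by (rule bij_betw_same_card)
  also have "\<dots> = (\<Prod>i<k. CARD('a) ^ k - CARD('a) ^ i)"
    using count_indep[OF subsp_im[OF D(1)], of k] D(3) by simp
  finally show ?thesis .
qed



lemma (in vectorspace) card_carrier_pow:
  assumes fK: "finite (carrier K)" and fV: "finite (carrier V)"
  shows "card (carrier V) = card (carrier K) ^ dim"
proof -
  have fd: fin_dim unfolding fin_dim_def
    using fV span_is_subset2[of "carrier V"] in_own_span[of "carrier V"]
    by (intro exI[of _ "carrier V"]) auto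
  obtain \<beta> where \<beta>: "finite \<beta>" "basis \<beta>" using finite_basis_exists[OF fd] by blast
  have d: "dim = card \<beta>" using dim_basis \<beta> by auto
  have bC: "\<beta> \<subseteq> carrier V" and li: "lin_indpt \<beta>" and gs: "span \<beta> = carrier V"
    using \<beta>(2) unfolding basis_def by auto
  have img: "(\<lambda>a. lincomb a \<beta>) ` (\<beta> \<rightarrow>\<^sub>E carrier K) = carrier V"
  proof (intro equalityI subsetI)
    fix v assume "v \<in> (\<lambda>a. lincomb a \<beta>) ` (\<beta> \<rightarrow>\<^sub>E carrier K)"
    thus "v \<in> carrier V" using lincomb_closed bC by auto
  next
    fix v assume "v \<in> carrier V"
    hence "v \<in> span \<beta>" using gs by simp
    then obtain a where a: "a \<in> \<beta> \<rightarrow> carrier K" "v = lincomb a \<beta>"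
      using finite_span[OF \<beta>(1) bC] by auto
    have l: "lincomb (restrict a \<beta>) \<beta> = lincomb a \<beta>"
      by (rule lincomb_cong[OF refl bC _ a(1)]) simp
    have r: "restrict a \<beta> \<in> \<beta> \<rightarrow>\<^sub>E carrier K" using a(1) by simp
    have "v = lincomb (restrict a \<beta>) \<beta>" using l a(2) by simp
    from image_eqI[where f="\<lambda>a. lincomb a \<beta>", OF this r] show "v \<in> (\<lambda>a. lincomb a \<beta>) ` (\<beta> \<rightarrow>\<^sub>E carrier K)" .
  qed
  have inj: "inj_on (\<lambda>a. lincomb a \<beta>) (\<beta> \<rightarrow>\<^sub>E carrier K)"
  proof (rule inj_onI)
    fix a b assume a: "a \<in> \<beta> \<rightarrow>\<^sub>E carrier K" and b: "b \<in> \<beta> \<rightarrow>\<^sub>E carrier K"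
      and e: "lincomb a \<beta> = lincomb b \<beta>"
    have bc: "lincomb b \<beta> \<in> carrier V" using b bC by (intro lincomb_closed) (auto simp: PiE_iff)
    have c: "(\<lambda>v. a v \<ominus>\<^bsub>K\<^esub> b v) \<in> \<beta> \<rightarrow> carrier K" using a b by auto
    have "lincomb (\<lambda>v. a v \<ominus>\<^bsub>K\<^esub> b v) \<beta> = lincomb a \<beta> \<ominus>\<^bsub>V\<^esub> lincomb b \<beta>"
      using a b bC \<beta>(1) by (intro lincomb_diff) auto
    also have "lincomb a \<beta> \<ominus>\<^bsub>V\<^esub> lincomb b \<beta> = \<zero>\<^bsub>V\<^esub>" using e by (simp add: M.minus_eq M.r_neg[OF bc])
    finally have z: "lincomb (\<lambda>v. a v \<ominus>\<^bsub>K\<^esub> b v) \<beta> = \<zero>\<^bsub>V\<^esub>" .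
    show "a = b"
    proof (rule extensionalityI[of a \<beta> b])
      show "a \<in> extensional \<beta>" "b \<in> extensional \<beta>" using a b by (auto simp: PiE_iff)
    next
      fix v assume v: "v \<in> \<beta>"
      have "a v \<ominus>\<^bsub>K\<^esub> b v = \<zero>\<^bsub>K\<^esub>"
      proof (rule ccontr)
        assume "a v \<ominus>\<^bsub>K\<^esub> b v \<noteq> \<zero>\<^bsub>K\<^esub>"
        hence "lin_dep \<beta>" using lin_dep_crit[OF \<beta>(1) subset_refl c v _ z] by blast
        thus False using li by simp
      qed
      moreover have av: "a v \<in> carrier K" "b v \<in> carrier K" using a b v by auto
      ultimately have "a v \<oplus>\<^bsub>K\<^esub> (\<ominus>\<^bsub>K\<^esub> b v) = \<zero>\<^bsub>K\<^esub>" by (simp add: R.minus_eq)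
      hence "a v = \<ominus>\<^bsub>K\<^esub> (\<ominus>\<^bsub>K\<^esub> b v)" using av by (intro R.sum_zero_eq_neg) auto
      thus "a v = b v" using av by simp
    qed
  qed
  have "card (carrier V) = card (\<beta> \<rightarrow>\<^sub>E carrier K)"
    using card_image[OF inj] img by simp
  also have "\<dots> = card (carrier K) ^ card \<beta>" by (simp add: card_PiE \<beta>(1))
  finally show ?thesis using d by simp
qed



lemma card_im_rank:
  fixes D :: "'a::{finite,field} mat"
  assumes D: "D \<in> carrier_mat n m"
  shows "card (im D) = CARD('a) ^ vec_space.rank n D"
proof -
  interpret VS: vec_space "TYPE('a)" n .
  have S: "set (cols D) \<subseteq> carrier_vec n" using D cols_dim by blast
  have vs: "vectorspace class_ring (VS.span_vs (set (cols D)))"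
    using S VS.span_is_subspace VS.subspace_is_vs by simp
  have sp: "VS.span (set (cols D)) = im D"
    using VS.col_space_eq[OF D] D unfolding VS.col_space_def im_def by auto
  have fin: "finite (carrier (VS.span_vs (set (cols D))))" using sp by simp
  have "card (carrier (VS.span_vs (set (cols D)))) =
     card (carrier (class_ring :: 'a ring)) ^ vectorspace.dim class_ring (VS.span_vs (set (cols D)))"
    by (rule vectorspace.card_carrier_pow[OF vs]) (use fin in auto)
  thus ?thesis using sp unfolding VS.rank_def by simp
qed

lemma card_kernel_dim:
  fixes D :: "'a::{finite,field} mat"
  assumes D: "D \<in> carrier_mat n m"
  shows "card (mat_kernel D) = CARD('a) ^ kernel_dim D"
proof -
  interpret K: kernel n m D by (unfold_locales) (rule D)
  have fin: "finite (mat_kernel D)"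
    by (rule finite_subset[of _ "carrier_vec m"]) (use D in \<open>auto simp: mat_kernel_def\<close>)
  have "card (mat_kernel D) = card (UNIV :: 'a set) ^ K.dim"
    using K.Ker.card_carrier_pow fin by simp
  thus ?thesis by simp
qed



lemma main_count:
  fixes T :: "'a::{finite,field} itself"
  shows "card {D :: 'a mat. D \<in> carrier_mat n n \<and> D * D = 0\<^sub>m n n \<and> card (im D) = CARD('a) ^ k}
      * (\<Prod>i<k. CARD('a) ^ k - CARD('a) ^ i)
    = (\<Prod>i<k. CARD('a) ^ n - CARD('a) ^ i) * (\<Prod>i<k. CARD('a) ^ (n - k) - CARD('a) ^ i)"
proof -
  let ?q = "CARD('a)"
  let ?ND = "{D :: 'a mat. D \<in> carrier_mat n n \<and> D * D = 0\<^sub>m n n \<and> card (im D) = ?q ^ k}"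
  let ?Surj = "{C :: 'a mat. C \<in> carrier_mat k n \<and> card (im C) = ?q ^ k}"
  let ?BK = "\<lambda>C. {B :: 'a mat. B \<in> carrier_mat n k \<and> im B \<subseteq> mat_kernel C \<and> indep B}"
  define P where "P = (SIGMA C:?Surj. ?BK C)"
  let ?f = "\<lambda>p. case p of (C,B) \<Rightarrow> B * (C :: 'a mat)"
  have q2: "?q \<ge> 2" by (rule q_ge2)
  have finS: "finite ?Surj" by (rule finite_subset[OF _ finite_carrier_mat[of k n]]) auto
  have finBK: "finite (?BK C)" for C by (rule finite_subset[OF _ finite_carrier_mat[of n k]]) auto
  have finND: "finite ?ND" by (rule finite_subset[OF _ finite_carrier_mat[of n n]]) auto
  have finP: "finite P" unfolding P_def using finS finBK by auto
  have cBK: "card (?BK C) = (\<Prod>i<k. ?q ^ (n - k) - ?q ^ i)" if C: "C \<in> ?Surj" for C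
  proof -
    have C1: "C \<in> carrier_mat k n" and C2: "card (im C) = ?q ^ k" using C by auto
    have "?q ^ k \<le> ?q ^ n" using C2 card_im_le[of C] C1 by simp
    hence kn: "k \<le> n" using q2 by (metis One_nat_def Suc_1 Suc_le_lessD power_le_imp_le_exp)
    have "?q ^ k * card (mat_kernel C) = ?q ^ k * ?q ^ (n - k)"
      using rank_nullity_card[OF C1] C2 kn by (simp add: power_add[symmetric])
    hence ck: "card (mat_kernel C) = ?q ^ (n - k)" using q2 by simp
    show ?thesis using count_indep[OF subsp_kernel[OF C1], of k] ck by simp
  qed
  have "card P = (\<Sum>C\<in>?Surj. card (?BK C))" unfolding P_def by (rule card_SigmaI[OF finS]) (use finBK in auto)
  also have "\<dots> = card ?Surj * (\<Prod>i<k. ?q ^ (n - k) - ?q ^ i)" using cBK by simp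
  also have "card ?Surj = (\<Prod>i<k. ?q ^ n - ?q ^ i)" using count_surj[of k n] by simp
  finally have cP1: "card P = (\<Prod>i<k. ?q ^ n - ?q ^ i) * (\<Prod>i<k. ?q ^ (n - k) - ?q ^ i)" .
  have fP: "?f p \<in> ?ND" if "p \<in> P" for p
  proof -
    obtain C B where pe: "p = (C,B)" by (cases p)
    have h: "C \<in> carrier_mat k n" "card (im C) = ?q ^ k" "B \<in> carrier_mat n k" "im B \<subseteq> mat_kernel C"
      "indep B" using that unfolding pe P_def by auto
    show ?thesis using fiber_elem[OF h] unfolding pe by simp
  qed
  have PU: "P = (\<Union>D\<in>?ND. {p \<in> P. ?f p = D})" using fP by blast
  have "card P = (\<Sum>D\<in>?ND. card {p \<in> P. ?f p = D})"
    by (subst PU, rule card_UN_disjoint) (use finND finP in auto)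
  also have "\<dots> = (\<Sum>D\<in>?ND. (\<Prod>i<k. ?q ^ k - ?q ^ i))"
  proof (rule sum.cong[OF refl])
    fix D assume "D \<in> ?ND"
    hence D: "D \<in> carrier_mat n n" "D * D = 0\<^sub>m n n" "card (im D) = ?q ^ k" by auto
    show "card {p \<in> P. ?f p = D} = (\<Prod>i<k. ?q ^ k - ?q ^ i)"
      using fiber_card[OF D] unfolding P_def by simp
  qed
  also have "\<dots> = card ?ND * (\<Prod>i<k. ?q ^ k - ?q ^ i)" by simp
  finally show ?thesis using cP1 by simp
qed



abbreviation ND :: "'a::{finite,field} itself \<Rightarrow> nat \<Rightarrow> nat \<Rightarrow> 'a mat set" where
  "ND T n k \<equiv> {D :: 'a mat. D \<in> carrier_mat n n \<and> D * D = 0\<^sub>m n n \<and> card (im D) = CARD('a) ^ k}"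

lemma pow_inj: "CARD('a::{finite,field}) ^ a = CARD('a) ^ b \<longleftrightarrow> a = b"
  using q_ge2[where 'a='a] by (simp add: power_inject_exp)

lemma diff_rank:
  fixes D :: "'a::{finite,field} mat"
  assumes "D \<in> differentials n"
  shows "card (im D) = CARD('a) ^ vec_space.rank n D \<and> 2 * vec_space.rank n D \<le> n
    \<and> homology_dim n D = n - 2 * vec_space.rank n D"
proof -
  have D: "D \<in> carrier_mat n n" "D * D = 0\<^sub>m n n" using assms unfolding differentials_def by auto
  let ?k = "vec_space.rank n D" and ?kd = "kernel_dim D" and ?q = "CARD('a)"
  have q2: "?q \<ge> 2" by (rule q_ge2)
  have ci: "card (im D) = ?q ^ ?k" by (rule card_im_rank[OF D(1)])
  have ck: "card (mat_kernel D) = ?q ^ ?kd" by (rule card_kernel_dim[OF D(1)])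
  have "?q ^ (?k + ?kd) = ?q ^ n" using rank_nullity_card[OF D(1)] ci ck by (simp add: power_add)
  hence s: "?k + ?kd = n" using pow_inj by blast
  have "im D \<subseteq> mat_kernel D" using mult_zero_iff_im_kernel[OF D(1) D(1)] D(2) by simp
  hence "card (im D) \<le> card (mat_kernel D)"
    by (intro card_mono) (use D(1) in \<open>auto intro: finite_subset[of _ "carrier_vec n"] simp: mat_kernel_def\<close>)
  hence "?q ^ ?k \<le> ?q ^ ?kd" using ci ck by simp
  hence "?k \<le> ?kd" using q2 by (metis One_nat_def Suc_1 Suc_le_lessD power_le_imp_le_exp)
  thus ?thesis using ci s unfolding homology_dim_def by auto
qed

lemma c_r_eq:
  fixes T :: "'a::{finite,field} itself"
  shows "c_r_count T r (r + 2 * m) = card (ND T (r + 2 * m) m)"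
proof -
  have "{D \<in> (differentials (r + 2 * m) :: 'a mat set). homology_dim (r + 2 * m) D = r} = ND T (r + 2 * m) m"
  proof (intro equalityI subsetI)
    fix D :: "'a mat" assume "D \<in> {D \<in> differentials (r + 2 * m). homology_dim (r + 2 * m) D = r}"
    hence D: "D \<in> differentials (r + 2 * m)" "homology_dim (r + 2 * m) D = r" by auto
    have "vec_space.rank (r + 2 * m) D = m" using diff_rank[OF D(1)] D(2) by auto
    thus "D \<in> ND T (r + 2 * m) m" using diff_rank[OF D(1)] D(1) unfolding differentials_def by auto
  next
    fix D :: "'a mat" assume D: "D \<in> ND T (r + 2 * m) m"
    hence Dd: "D \<in> differentials (r + 2 * m)" unfolding differentials_def by auto
    have "vec_space.rank (r + 2 * m) D = m" using diff_rank[OF Dd] D pow_inj by auto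
    thus "D \<in> {D \<in> differentials (r + 2 * m). homology_dim (r + 2 * m) D = r}"
      using diff_rank[OF Dd] Dd by auto
  qed
  thus ?thesis unfolding c_r_count_def by simp
qed

lemma c_eq:
  fixes T :: "'a::{finite,field} itself"
  shows "c_count T n = (\<Sum>k\<le>n div 2. card (ND T n k))"
proof -
  have U: "(differentials n :: 'a mat set) = (\<Union>k\<in>{..n div 2}. ND T n k)"
  proof (intro equalityI subsetI)
    fix D :: "'a mat" assume D: "D \<in> differentials n"
    have "vec_space.rank n D \<in> {..n div 2}" using diff_rank[OF D] by auto
    moreover have "D \<in> ND T n (vec_space.rank n D)" using diff_rank[OF D] D unfolding differentials_def by auto
    ultimately show "D \<in> (\<Union>k\<in>{..n div 2}. ND T n k)" by blast
  qed (auto simp: differentials_def)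
  have "card (differentials n :: 'a mat set) = (\<Sum>k\<le>n div 2. card (ND T n k))"
    unfolding U
  proof (rule card_UN_disjoint)
    show "\<forall>i\<in>{..n div 2}. finite (ND T n i)"
      by (auto intro: finite_subset[OF _ finite_carrier_mat[of n n]])
    show "\<forall>i\<in>{..n div 2}. \<forall>j\<in>{..n div 2}. i \<noteq> j \<longrightarrow> ND T n i \<inter> ND T n j = {}"
      using pow_inj[where 'a='a] by auto
  qed simp
  thus ?thesis unfolding c_count_def .
qed



definition Pq :: "real \<Rightarrow> nat \<Rightarrow> real" where "Pq Q m = (\<Prod>j=1..m. Q ^ j - 1)"
definition Eq :: "real \<Rightarrow> nat \<Rightarrow> real" where "Eq Q k = (\<Prod>i<k. Q ^ i)"
definition IR :: "real \<Rightarrow> nat \<Rightarrow> nat \<Rightarrow> real" where "IR Q a k = (\<Prod>i<k. Q ^ a - Q ^ i)"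
definition cf :: "real \<Rightarrow> nat \<Rightarrow> nat \<Rightarrow> real" where
  "cf Q r k = Eq Q k * Pq Q (r + 2 * k) / (Pq Q r * Pq Q k)"

lemma Pq_0[simp]: "Pq Q 0 = 1" unfolding Pq_def by simp
lemma Pq_Suc: "Pq Q (Suc m) = Pq Q m * (Q ^ Suc m - 1)" unfolding Pq_def by (simp add: prod.nat_ivl_Suc')
lemma Eq_Suc: "Eq Q (Suc k) = Eq Q k * Q ^ k" unfolding Eq_def by simp
lemma IR_Suc: "IR Q a (Suc k) = IR Q a k * (Q ^ a - Q ^ k)" unfolding IR_def by simp

lemma Pq_pos: "Q > 1 \<Longrightarrow> Pq Q m > 0"
  unfolding Pq_def by (intro prod_pos) (auto simp: one_less_power)
lemma Eq_pos: "Q > 1 \<Longrightarrow> Eq Q k > 0"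
  unfolding Eq_def by (intro prod_pos) auto

lemma IR_closed:
  assumes Q: "Q > 1" and k: "k \<le> a"
  shows "IR Q a k * Pq Q (a - k) = Eq Q k * Pq Q a"
  using k
proof (induction k)
  case 0 thus ?case by (simp add: IR_def Eq_def)
next
  case (Suc k)
  hence IH: "IR Q a k * Pq Q (a - k) = Eq Q k * Pq Q a" by simp
  obtain j where j: "a - k = Suc j" using Suc.prems by (metis Suc_diff_le diff_Suc_Suc diff_zero le_SucE less_eq_Suc_le not_less_eq_eq Suc_le_lessD zero_less_diff less_imp_Suc_add)
  have aj: "a - Suc k = j" using j by simp
  have Pq1: "Pq Q (a - k) = Pq Q j * (Q ^ Suc j - 1)" using j Pq_Suc by simp
  have "Q ^ a = Q ^ k * Q ^ Suc j" using j Suc.prems by (metis add_diff_inverse_nat not_less_eq_eq Suc_leD power_add le_SucE less_imp_le_nat not_le)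
  hence qa: "Q ^ a - Q ^ k = Q ^ k * (Q ^ Suc j - 1)" by (simp add: algebra_simps)
  have nz: "Q ^ Suc j - 1 \<noteq> 0" using Q by (metis less_numeral_extra(4) one_less_power right_minus_eq zero_less_Suc)
  have "IR Q a (Suc k) * Pq Q (a - Suc k) * (Q ^ Suc j - 1) = (IR Q a k * Pq Q (a - k)) * Q ^ k * (Q ^ Suc j - 1)"
    unfolding IR_Suc aj qa Pq1 by (simp add: algebra_simps)
  also have "\<dots> = Eq Q (Suc k) * Pq Q a * (Q ^ Suc j - 1)" unfolding IH Eq_Suc by (simp add: algebra_simps)
  finally show ?case using nz by simp
qed

lemma IR_eq:
  assumes Q: "Q > 1" and k: "k \<le> a"
  shows "IR Q a k = Eq Q k * Pq Q a / Pq Q (a - k)"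
  using IR_closed[OF assms] Pq_pos[OF Q, of "a - k"] by (simp add: field_simps)

lemma ND_real:
  fixes T :: "'a::{finite,field} itself"
  shows "real (card (ND T (r + 2 * k) k)) = cf (real CARD('a)) r k"
proof -
  let ?q = "CARD('a)" and ?Q = "real CARD('a)"
  have Q: "?Q > 1" using q_ge2[where 'a='a] by simp
  have conv: "real (\<Prod>i<k. ?q ^ a - ?q ^ i) = IR ?Q a k" if "k \<le> a" for a
  proof -
    have "real (\<Prod>i<k. ?q ^ a - ?q ^ i) = (\<Prod>i<k. real (?q ^ a - ?q ^ i))" by simp
    also have "\<dots> = (\<Prod>i<k. ?Q ^ a - ?Q ^ i)"
    proof (rule prod.cong[OF refl])
      fix i assume "i \<in> {..<k}"
      hence "?q ^ i \<le> ?q ^ a" using that q_ge2[where 'a='a] by (intro power_increasing) auto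
      thus "real (?q ^ a - ?q ^ i) = ?Q ^ a - ?Q ^ i" by (simp add: of_nat_diff)
    qed
    finally show ?thesis unfolding IR_def .
  qed
  have mc: "real (card (ND T (r + 2 * k) k)) * IR ?Q k k = IR ?Q (r + 2 * k) k * IR ?Q (r + 2 * k - k) k"
    using arg_cong[OF main_count[where 'a='a, of "r + 2 * k" k], of real] conv[of k] conv[of "r + 2 * k"]
      conv[of "r + 2 * k - k"] by (simp del: of_nat_prod)
  have e1: "IR ?Q k k = Eq ?Q k * Pq ?Q k" using IR_eq[OF Q, of k k] by simp
  have e2: "IR ?Q (r + 2 * k) k = Eq ?Q k * Pq ?Q (r + 2 * k) / Pq ?Q (r + k)"
    using IR_eq[OF Q, of k "r + 2 * k"] by (simp add: algebra_simps)
  have e3: "IR ?Q (r + 2 * k - k) k = Eq ?Q k * Pq ?Q (r + k) / Pq ?Q r"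
    using IR_eq[OF Q, of k "r + k"] by (simp add: algebra_simps)
  have pos: "Eq ?Q k > 0" "Pq ?Q k > 0" "Pq ?Q (r + k) > 0" "Pq ?Q r > 0"
    using Eq_pos[OF Q] Pq_pos[OF Q] by auto
  show ?thesis using mc pos unfolding e1 e2 e3 cf_def by (simp add: field_simps)
qed



definition beta :: "real \<Rightarrow> nat \<Rightarrow> nat \<Rightarrow> real" where
  "beta Q e s = (\<Prod>i<s. Q / ((Q ^ (e + 2 * i + 1) - 1) * (Q ^ (e + 2 * i + 2) - 1)))"
definition bb :: "real \<Rightarrow> nat \<Rightarrow> nat \<Rightarrow> nat \<Rightarrow> real" where
  "bb Q e M s = beta Q e s * (\<Prod>i<s. 1 - 1 / Q ^ (M - i))"

lemma pw: "Q > 1 \<Longrightarrow> 0 < n \<Longrightarrow> Q ^ n - 1 > (0::real)"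
  using one_less_power by fastforce

lemma cf_step:
  assumes Q: "Q > 1"
  shows "cf Q (r + 2) j * (Q ^ j * (Q ^ (r + 1) - 1) * (Q ^ (r + 2) - 1)) = cf Q r (Suc j) * (Q ^ Suc j - 1)"
proof -
  have P2: "Pq Q (r + 2) = Pq Q r * (Q ^ (r + 1) - 1) * (Q ^ (r + 2) - 1)"
    using Pq_Suc[of Q "Suc r"] Pq_Suc[of Q r] by simp
  have P3: "r + 2 + 2 * j = r + 2 * Suc j" by simp
  have pos: "Pq Q r > 0" "Pq Q j > 0" "Eq Q j > 0" using Pq_pos[OF Q] Eq_pos[OF Q] by auto
  have pos2: "Q ^ (r + 1) - 1 > 0" "Q ^ (r + 2) - 1 > 0" "Q ^ Suc j - 1 > 0"
    by (rule pw[OF Q], simp)+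
  have aux: "(E * PN / ((Pr * B1 * B2) * Pj)) * (A * B1 * B2) = ((E * A) * PN / (Pr * (Pj * D))) * D"
    if "Pr > 0" "Pj > 0" "B1 > 0" "B2 > 0" "D > 0" for E PN Pr Pj A B1 B2 D :: real
    using that by (simp add: field_simps)
  show ?thesis unfolding cf_def P2 P3 Eq_Suc Pq_Suc[of Q j]
    by (rule aux) (use pos pos2 in auto)
qed

lemma cf_b:
  assumes Q: "Q > 1"
  shows "s \<le> M \<Longrightarrow> cf Q (e + 2 * s) (M - s) = cf Q e M * bb Q e M s"
proof (induction s)
  case 0 thus ?case by (simp add: bb_def beta_def)
next
  case (Suc s)
  define j where "j = M - Suc s"
  have Ms: "M - s = Suc j" using Suc.prems unfolding j_def by simp
  have IH: "cf Q (e + 2 * s) (Suc j) = cf Q e M * bb Q e M s" using Suc Ms by simp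
  have st: "cf Q (e + 2 * s + 2) j * (Q ^ j * (Q ^ (e + 2 * s + 1) - 1) * (Q ^ (e + 2 * s + 2) - 1))
      = cf Q (e + 2 * s) (Suc j) * (Q ^ Suc j - 1)" by (rule cf_step[OF Q])
  have pos: "Q ^ (e + 2 * s + 1) - 1 > 0" "Q ^ (e + 2 * s + 2) - 1 > 0"
    by (rule pw[OF Q], simp)+
  have "Q ^ j > 0" using Q by simp
  have bS: "bb Q e M (Suc s) = bb Q e M s * (Q / ((Q ^ (e + 2 * s + 1) - 1) * (Q ^ (e + 2 * s + 2) - 1)))
      * (1 - 1 / (Q * Q ^ j))"
    unfolding bb_def beta_def using Ms by simp
  have cS: "cf Q (e + 2 * Suc s) (M - Suc s) = cf Q (e + 2 * s + 2) j"
    unfolding j_def by (simp add: algebra_simps)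
  have aux: "X = C * (Q / (B1 * B2)) * (1 - 1 / (Q * A))"
    if "A > 0" "B1 > 0" "B2 > 0" "Q > 0" "X * (A * B1 * B2) = C * (Q * A - 1)" for A B1 B2 X C :: real
  proof -
    have X: "X = C * (Q * A - 1) / (A * B1 * B2)" using that by (simp add: field_simps)
    have "C * (Q / (B1 * B2)) * (1 - 1 / (Q * A)) = C * (Q * A - 1) / (A * B1 * B2)"
      using that by (simp add: field_simps)
    thus ?thesis using X by simp
  qed
  have "cf Q (e + 2 * s + 2) j = cf Q e M * bb Q e M s * (Q / ((Q ^ (e + 2 * s + 1) - 1) * (Q ^ (e + 2 * s + 2) - 1)))
      * (1 - 1 / (Q * Q ^ j))"
    by (rule aux) (use pos Q \<open>Q ^ j > 0\<close> st IH in \<open>simp_all only: power_Suc\<close>)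
  thus ?case using bS cS by (simp add: mult.assoc)
qed

lemma sum_rev_atMost: "(\<Sum>k\<le>M. f k) = (\<Sum>t\<le>M. f (M - t :: nat))"
  by (rule sum.reindex_bij_witness[where i="\<lambda>t. M - t" and j="\<lambda>t. M - t"]) auto

lemma cf_pos: "Q > 1 \<Longrightarrow> cf Q r k > 0"
  unfolding cf_def using Pq_pos Eq_pos by (simp add: field_simps)

lemma p_formula:
  fixes T :: "'a::{finite,field} itself"
  assumes e: "e < 2"
  shows "p_prob T (e + 2 * s) (e + 2 * s + 2 * m) =
    bb (real CARD('a)) e (s + m) s / (\<Sum>t\<le>s + m. bb (real CARD('a)) e (s + m) t)"
proof -
  let ?Q = "real CARD('a)"
  have Q: "?Q > 1" using q_ge2[where 'a='a] by simp
  define M where "M = s + m"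
  have n: "e + 2 * s + 2 * m = e + 2 * M" unfolding M_def by simp
  have num: "real (c_r_count T (e + 2 * s) (e + 2 * s + 2 * m)) = cf ?Q e M * bb ?Q e M s"
    using c_r_eq[of T "e + 2 * s" m] ND_real[where 'a='a, of "e + 2 * s" m] cf_b[OF Q, of s M e] unfolding M_def by simp
  have "real (c_count T (e + 2 * M)) = (\<Sum>k\<le>M. real (card (ND T (e + 2 * M) k)))"
    using c_eq[of T "e + 2 * M"] e by simp
  also have "\<dots> = (\<Sum>t\<le>M. real (card (ND T (e + 2 * M) (M - t))))" by (rule sum_rev_atMost)
  also have "\<dots> = (\<Sum>t\<le>M. cf ?Q e M * bb ?Q e M t)"
  proof (rule sum.cong[OF refl])
    fix t assume "t \<in> {..M}"
    hence t: "t \<le> M" by simp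
    have eq: "e + 2 * M = e + 2 * t + 2 * (M - t)" using t by simp
    have h: "real (card (ND T (e + 2 * t + 2 * (M - t)) (M - t))) = cf ?Q (e + 2 * t) (M - t)"
      by (rule ND_real)
    hence "real (card (ND T (e + 2 * M) (M - t))) = cf ?Q (e + 2 * t) (M - t)"
      by (simp only: eq)
    thus "real (card (ND T (e + 2 * M) (M - t))) = cf ?Q e M * bb ?Q e M t" using cf_b[OF Q t] by simp
  qed
  also have "\<dots> = cf ?Q e M * (\<Sum>t\<le>M. bb ?Q e M t)" by (simp add: sum_distrib_left)
  finally have "real (c_count T (e + 2 * M)) = cf ?Q e M * (\<Sum>t\<le>M. bb ?Q e M t)" .
  hence den: "real (c_count T (e + 2 * s + 2 * m)) = cf ?Q e M * (\<Sum>t\<le>M. bb ?Q e M t)" by (simp only: n)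
  show ?thesis unfolding p_prob_def num den using cf_pos[OF Q, of e M] unfolding M_def by simp
qed


lemma beta_Suc: "beta Q e (Suc s) = beta Q e s * (Q / ((Q ^ (e + 2 * s + 1) - 1) * (Q ^ (e + 2 * s + 2) - 1)))"
  unfolding beta_def by simp

lemma beta_0[simp]: "beta Q e 0 = 1" unfolding beta_def by simp

lemma beta_pos: assumes Q: "Q > 1" shows "beta Q e s > 0"
  unfolding beta_def
proof (rule prod_pos)
  fix i
  have p: "Q ^ (e + 2 * i + 1) - 1 > 0" "Q ^ (e + 2 * i + 2) - 1 > 0" by (rule pw[OF Q], simp)+
  show "0 < Q / ((Q ^ (e + 2 * i + 1) - 1) * (Q ^ (e + 2 * i + 2) - 1))"
    by (rule divide_pos_pos, use Q in simp, rule mult_pos_pos, rule p(1), rule p(2))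
qed

lemma ratio_le:
  fixes Q :: real
  assumes Q: "Q \<ge> 2"
  shows "Q / ((Q ^ (e + 2 * s + 1) - 1) * (Q ^ (e + 2 * s + 2) - 1)) \<le> 2 / 3"
proof -
  have a0: "Q ^ 1 \<le> Q ^ (e + 2 * s + 1)" by (rule power_increasing) (use Q in auto)
  hence a: "Q \<le> Q ^ (e + 2 * s + 1)" by (simp only: power_one_right)
  have b: "Q ^ 2 \<le> Q ^ (e + 2 * s + 2)" by (rule power_increasing) (use Q in auto)
  have c: "0 \<le> 2 * (Q ^ 2 - 1) - 3 * Q"
  proof -
    have "2 * (Q ^ 2 - 1) - 3 * Q = (Q - 2) * (2 * Q + 1)" by (simp add: power2_eq_square algebra_simps)
    also have "\<dots> \<ge> 0" using Q by simp
    finally show ?thesis .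
  qed
  have gen: "Q / ((A - 1) * (B - 1)) \<le> 2 / 3" if "Q \<le> A" "Y \<le> B" "0 \<le> 2 * (Y - 1) - 3 * Q"
    for A B Y :: real
  proof -
    have A1: "A - 1 \<ge> 1" using that Q by linarith
    have B1: "2 * (B - 1) \<ge> 3 * Q" using that by (simp add: algebra_simps)
    have B0: "B - 1 \<ge> 0" using B1 Q by (simp add: algebra_simps)
    have "(A - 1) * (B - 1) \<ge> 1 * (B - 1)" using A1 B0 by (intro mult_right_mono) auto
    hence X: "(A - 1) * (B - 1) \<ge> B - 1" by simp
    have gen2: "2 * X \<ge> 3 * Q" if "X \<ge> Z" "2 * Z \<ge> 3 * Q" for X Z :: real using that by simp
    have P: "2 * ((A - 1) * (B - 1)) \<ge> 3 * Q" by (rule gen2[OF X B1])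
    hence "(A - 1) * (B - 1) > 0" using Q by simp
    thus ?thesis using P by (simp add: divide_le_eq)
  qed
  show ?thesis by (rule gen[OF a b c])
qed

lemma summable_beta:
  fixes Q :: real
  assumes Q: "Q \<ge> 2"
  shows "summable (beta Q e)"
proof (rule summable_ratio_test[where c="2/3" and N=0])
  fix n :: nat
  have p: "beta Q e n > 0" using beta_pos[of Q e n] Q by simp
  have "beta Q e (Suc n) \<le> beta Q e n * (2 / 3)"
    unfolding beta_Suc using ratio_le[OF Q, of e n] p by (intro mult_left_mono) auto
  thus "norm (beta Q e (Suc n)) \<le> 2 / 3 * norm (beta Q e n)"
    using p beta_pos[of Q e "Suc n"] Q by simp
qed simp

lemma bb_bounds:
  fixes Q :: real
  assumes Q: "Q > 1"
  shows "0 \<le> bb Q e M s" "bb Q e M s \<le> beta Q e s"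
proof -
  have f: "0 \<le> 1 - 1 / Q ^ k \<and> 1 - 1 / Q ^ k \<le> 1" for k
  proof -
    have "Q ^ k \<ge> 1" using Q by (simp add: one_le_power)
    thus ?thesis by (simp add: field_simps)
  qed
  have p1: "0 \<le> (\<Prod>i<s. 1 - 1 / Q ^ (M - i))" using f by (intro prod_nonneg) auto
  have p2: "(\<Prod>i<s. 1 - 1 / Q ^ (M - i)) \<le> 1" using f by (intro prod_le_1) auto
  have b: "beta Q e s > 0" by (rule beta_pos[OF Q])
  show "0 \<le> bb Q e M s" unfolding bb_def using p1 b by simp
  show "bb Q e M s \<le> beta Q e s" unfolding bb_def using p2 b
    by (metis mult.right_neutral mult_left_mono less_imp_le)
qed

lemma bb_zero: "M < s \<Longrightarrow> bb Q e M s = 0"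
  unfolding bb_def by (subst prod_zero[of "{..<s}" _]) (auto intro!: bexI[of _ M])

lemma bb_lim:
  fixes Q :: real
  assumes Q: "Q > 1"
  shows "(\<lambda>M. bb Q e M s) \<longlonglongrightarrow> beta Q e s"
proof -
  have "(\<lambda>M. \<Prod>i<s. 1 - 1 / Q ^ (M - i)) \<longlonglongrightarrow> (\<Prod>i<s. 1 - 0)"
  proof (rule tendsto_prod)
    fix i
    have z: "(\<lambda>n. (1 / Q) ^ n) \<longlonglongrightarrow> 0" using Q by (intro LIMSEQ_realpow_zero) auto
    have "(\<lambda>M. (1 / Q) ^ (M - i)) \<longlonglongrightarrow> 0"
      using filterlim_compose[OF z filterlim_minus_const_nat_at_top] by (simp add: o_def)
    hence "(\<lambda>M. 1 / Q ^ (M - i)) \<longlonglongrightarrow> 0" by (simp add: power_one_over)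
    thus "(\<lambda>M. 1 - 1 / Q ^ (M - i)) \<longlonglongrightarrow> 1 - 0" by (intro tendsto_diff) auto
  qed
  hence "(\<lambda>M. beta Q e s * (\<Prod>i<s. 1 - 1 / Q ^ (M - i))) \<longlonglongrightarrow> beta Q e s * 1"
    by (intro tendsto_mult) auto
  thus ?thesis unfolding bb_def by simp
qed

lemma sum_bb_lim:
  fixes Q :: real
  assumes Q: "Q \<ge> 2"
  shows "(\<lambda>M. \<Sum>t\<le>M. bb Q e M t) \<longlonglongrightarrow> (\<Sum>t. beta Q e t)"
proof -
  have Q1: "Q > 1" using Q by simp
  have eq: "(\<Sum>t\<le>M. bb Q e M t) = (\<Sum>t. bb Q e M t)" for M
    by (rule suminf_finite[symmetric]) (auto intro: bb_zero)
  have "eventually (\<lambda>n. summable (\<lambda>k. norm (bb Q e n k))) sequentially \<and>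
           summable (\<lambda>n. norm (beta Q e n)) \<and>
           ((\<lambda>n. suminf (\<lambda>k. bb Q e n k)) \<longlonglongrightarrow> suminf (beta Q e))"
  proof (rule tannerys_theorem)
    show "\<And>k. (\<lambda>n. bb Q e n k) \<longlonglongrightarrow> beta Q e k" using bb_lim[OF Q1] .
    show "eventually (\<lambda>(k,n). norm (bb Q e n k) \<le> beta Q e k) (at_top \<times>\<^sub>F sequentially)"
      by (rule always_eventually) (use bb_bounds[OF Q1] in auto)
    show "summable (beta Q e)" by (rule summable_beta[OF Q])
  qed simp
  thus ?thesis unfolding eq by simp
qed

lemma beta_closed:
  fixes Q :: real
  assumes Q: "Q > 1"
  shows "beta Q e s * Pq Q (e + 2 * s) = Q ^ s * Pq Q e"
proof (induction s)
  case 0 thus ?case by simp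
next
  case (Suc s)
  have P: "Pq Q (e + 2 * Suc s) = Pq Q (e + 2 * s) * (Q ^ (e + 2 * s + 1) - 1) * (Q ^ (e + 2 * s + 2) - 1)"
    using Pq_Suc[of Q "Suc (e + 2 * s)"] Pq_Suc[of Q "e + 2 * s"] by simp
  have pos: "Q ^ (e + 2 * s + 1) - 1 > 0" "Q ^ (e + 2 * s + 2) - 1 > 0" by (rule pw[OF Q], simp)+
  have aux: "b * (Q / (B1 * B2)) * (P * B1 * B2) = Q * (b * P)" if "B1 > 0" "B2 > 0" for b P B1 B2 :: real
    using that by (simp add: field_simps)
  have "beta Q e (Suc s) * Pq Q (e + 2 * Suc s) = Q * (beta Q e s * Pq Q (e + 2 * s))"
    unfolding beta_Suc P by (rule aux) (rule pos)+
  thus ?case using Suc.IH by simp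
qed


theorem theorem1:
  fixes T :: "'a::{finite,field} itself"
  defines "q \<equiv> real CARD('a)"
  defines "plim \<equiv> \<lambda>r::nat. lim (\<lambda>m::nat. p_prob T r (r + 2 * m))"
  shows "(\<forall>r::nat. convergent (\<lambda>m::nat. p_prob T r (r + 2 * m)) \<and> 0 < plim r \<and> plim r < 1)
    \<and> (\<forall>r::nat. even r \<and> r \<ge> 2 \<longrightarrow>
          plim r / plim 0 = q ^ (r div 2) / (\<Prod>j=1..r. q ^ j - 1))
    \<and> summable (\<lambda>k. q ^ (k + 1) / (\<Prod>j=1..2*(k+1). q ^ j - 1))
    \<and> plim 0 = 1 / (1 + (\<Sum>k. q ^ (k + 1) / (\<Prod>j=1..2*(k+1). q ^ j - 1)))
    \<and> (\<forall>r::nat. odd r \<and> r \<ge> 3 \<longrightarrow>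
          plim r / plim 1 = (q - 1) * q ^ ((r - 1) div 2) / (\<Prod>j=1..r. q ^ j - 1))
    \<and> summable (\<lambda>k. q ^ (k + 1) / (\<Prod>j=1..2*(k+1)+1. q ^ j - 1))
    \<and> plim 1 = 1 / (1 + (q - 1) * (\<Sum>k. q ^ (k + 1) / (\<Prod>j=1..2*(k+1)+1. q ^ j - 1)))"
proof -
  have Q2: "q \<ge> 2" unfolding q_def using q_ge2[where 'a='a] by simp
  hence Q1: "q > 1" by simp
  define S where "S e = (\<Sum>t. beta q e t)" for e
  have summ: "summable (beta q e)" for e by (rule summable_beta[OF Q2])
  have Spos: "S e > 0" for e unfolding S_def using summ beta_pos[OF Q1] by (intro suminf_pos) auto
  have lim_e: "(\<lambda>m. p_prob T (e + 2 * s) (e + 2 * s + 2 * m)) \<longlonglongrightarrow> beta q e s / S e"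
    if e: "e < 2" for e s
  proof -
    have pf: "p_prob T (e + 2 * s) (e + 2 * s + 2 * m) = bb q e (m + s) s / (\<Sum>t\<le>m + s. bb q e (m + s) t)" for m
      using p_formula[OF e, of T s m] unfolding q_def by (simp add: add.commute)
    have l1: "(\<lambda>m. bb q e (m + s) s) \<longlonglongrightarrow> beta q e s"
      by (rule LIMSEQ_ignore_initial_segment[OF bb_lim[OF Q1]])
    have l2: "(\<lambda>m. \<Sum>t\<le>m + s. bb q e (m + s) t) \<longlonglongrightarrow> S e"
      unfolding S_def by (rule LIMSEQ_ignore_initial_segment[OF sum_bb_lim[OF Q2], of e s])
    show ?thesis unfolding pf by (rule tendsto_divide[OF l1 l2]) (use Spos in \<open>simp add: less_imp_neq[symmetric]\<close>)
  qed
  have lim_r: "(\<lambda>m. p_prob T r (r + 2 * m)) \<longlonglongrightarrow> beta q (r mod 2) (r div 2) / S (r mod 2)" for r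
  proof -
    have r: "r = r mod 2 + 2 * (r div 2)" by simp
    have "(\<lambda>m. p_prob T (r mod 2 + 2 * (r div 2)) (r mod 2 + 2 * (r div 2) + 2 * m))
        \<longlonglongrightarrow> beta q (r mod 2) (r div 2) / S (r mod 2)" by (rule lim_e) simp
    thus ?thesis using r by simp
  qed
  have plim_eq: "plim r = beta q (r mod 2) (r div 2) / S (r mod 2)" for r
    unfolding plim_def using lim_r[of r] by (rule limI)
  have P1: "convergent (\<lambda>m. p_prob T r (r + 2 * m)) \<and> 0 < plim r \<and> plim r < 1" for r
  proof (intro conjI)
    show "convergent (\<lambda>m. p_prob T r (r + 2 * m))" using lim_r[of r] by (rule convergentI)
    show "0 < plim r" unfolding plim_eq using beta_pos[OF Q1] Spos by simp
    let ?e = "r mod 2" and ?s = "r div 2"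
    have "(\<Sum>t\<in>{?s, Suc ?s}. beta q ?e t) \<le> S ?e"
      unfolding S_def by (rule sum_le_suminf[OF summ]) (use beta_pos[OF Q1] in \<open>auto intro: less_imp_le\<close>)
    hence "beta q ?e ?s + beta q ?e (Suc ?s) \<le> S ?e" by simp
    hence "beta q ?e ?s < S ?e" using beta_pos[OF Q1, of ?e "Suc ?s"] by simp
    thus "plim r < 1" unfolding plim_eq using Spos[of ?e] by simp
  qed
  have Pq_eq: "Pq q r = (\<Prod>j=1..r. q ^ j - 1)" for r unfolding Pq_def ..
  have Pq1: "Pq q 1 = q - 1" unfolding Pq_def by simp
  have bc: "beta q e s = q ^ s * Pq q e / Pq q (e + 2 * s)" for e s
    using beta_closed[OF Q1, of e s] Pq_pos[OF Q1, of "e + 2 * s"] by (simp add: field_simps)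
  have P2: "plim r / plim 0 = q ^ (r div 2) / (\<Prod>j=1..r. q ^ j - 1)" if r: "even r" "r \<ge> 2" for r
  proof -
    have "plim r / plim 0 = beta q 0 (r div 2)"
      unfolding plim_eq using r Spos[of 0] by simp
    also have "\<dots> = q ^ (r div 2) / Pq q r" unfolding bc using r by simp
    finally show ?thesis unfolding Pq_eq .
  qed
  have term0: "q ^ (k + 1) / (\<Prod>j=1..2*(k+1). q ^ j - 1) = beta q 0 (Suc k)" for k
    unfolding bc Pq_eq by simp
  have P3: "summable (\<lambda>k. q ^ (k + 1) / (\<Prod>j=1..2*(k+1). q ^ j - 1))"
    unfolding term0 using summ[of 0] by (simp add: summable_Suc_iff)
  have P4: "plim 0 = 1 / (1 + (\<Sum>k. q ^ (k + 1) / (\<Prod>j=1..2*(k+1). q ^ j - 1)))"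
  proof -
    have "(\<Sum>k. q ^ (k + 1) / (\<Prod>j=1..2*(k+1). q ^ j - 1)) = S 0 - 1"
      unfolding term0 S_def using suminf_split_head[OF summ[of 0]] by simp
    thus ?thesis unfolding plim_eq by simp
  qed
  have P5: "plim r / plim 1 = (q - 1) * q ^ ((r - 1) div 2) / (\<Prod>j=1..r. q ^ j - 1)"
    if r: "odd r" "r \<ge> 3" for r
  proof -
    have "plim r / plim 1 = beta q 1 (r div 2)"
      unfolding plim_eq using r Spos[of 1] by (simp add: odd_iff_mod_2_eq_one)
    also have "\<dots> = q ^ (r div 2) * (q - 1) / Pq q r"
      unfolding bc Pq1 using r by (simp add: odd_two_times_div_two_succ)
    also have "r div 2 = (r - 1) div 2" using r by (auto elim!: oddE)
    finally show ?thesis unfolding Pq_eq by (simp add: mult.commute)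
  qed
  have term1: "q ^ (k + 1) / (\<Prod>j=1..2*(k+1)+1. q ^ j - 1) = beta q 1 (Suc k) / (q - 1)" for k
  proof -
    have idx: "1 + 2 * Suc k = 2 * (k + 1) + 1" by simp
    have "beta q 1 (Suc k) / (q - 1) = q ^ Suc k * (q - 1) / Pq q (2 * (k + 1) + 1) / (q - 1)"
      by (simp only: bc Pq1 idx)
    also have "\<dots> = q ^ (k + 1) / Pq q (2 * (k + 1) + 1)" using Q1 by simp
    finally show ?thesis unfolding Pq_eq by simp
  qed
  have P6: "summable (\<lambda>k. q ^ (k + 1) / (\<Prod>j=1..2*(k+1)+1. q ^ j - 1))"
    unfolding term1 using summ[of 1] by (intro summable_divide) (simp add: summable_Suc_iff)
  have P7: "plim 1 = 1 / (1 + (q - 1) * (\<Sum>k. q ^ (k + 1) / (\<Prod>j=1..2*(k+1)+1. q ^ j - 1)))"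
  proof -
    have "(\<Sum>k. q ^ (k + 1) / (\<Prod>j=1..2*(k+1)+1. q ^ j - 1)) = (\<Sum>k. beta q 1 (Suc k)) / (q - 1)"
      unfolding term1 using summ[of 1] by (intro suminf_divide) (simp add: summable_Suc_iff)
    also have "(\<Sum>k. beta q 1 (Suc k)) = S 1 - 1"
      unfolding S_def using suminf_split_head[OF summ[of 1]] by simp
    finally have "(q - 1) * (\<Sum>k. q ^ (k + 1) / (\<Prod>j=1..2*(k+1)+1. q ^ j - 1)) = S 1 - 1"
      using Q1 by simp
    thus ?thesis unfolding plim_eq by simp
  qed
  show ?thesis using P1 P2 P3 P4 P5 P6 P7 by blast
qed


end
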